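(* The functors $(\cdot)^*:\mathbf{D\text{-}Frm}\to\mathbf{HLAs}$ and $(\cdot)_*:\mathbf{HLAs}\to\mathbf{D\text{-}Frm}$ form a dual equivalence of categories $\mathbf{HLAs}\equiv^{\mathrm{op}}\mathbf{D\text{-}Frm}$.
   Context: $\mathbf{HLAs}$: category of Heyting-Lewis algebras (Heyting algebras with binary $\multimap$ satisfying $(a\multimap b)\wedge(a\multimap c)=a\multimap(b\wedge c)$, $(a\multimap c)\wedge(b\multimap c)=(a\vee b)\multimap c$, $(a\multimap b)\wedge(b\multimap c)\le a\multimap c$, $a\multimap a=\top$) with Heyting homomorphisms preserving $\multimap$. A $\multimap$-frame is $(X,\preceq,\sqsubset)$, $\preceq$ a partial order, with $x\preceq y\sqsubset z\Rightarrow x\sqsubset z$; $a\Rightarrow b$ and $a\Rrightarrow b$ on $\preceq$-upsets are $\{x\mid\forall y(xRy, y\in a\Rightarrow y\in b)\}$ for $R={\preceq}$, resp. $R={\sqsubset}$. A general $\multimap$-frame $(X,\preceq,\sqsubset,P)$ has $P$ a family of $\preceq$-upsets containing $X,\emptyset$, closed under $\cap,\cup,\Rightarrow,\Rrightarrow$; it is descriptive if compact (any subfamily of $P\cup\{X\setminus a\mid a\in P\}$ with the finite intersection property has nonempty intersection), $\preceq$-refined ($x\not\preceq y\Rightarrow\exists a\in P$, $x\in a$, $y\notin a$) and $\sqsubset$-refined (not $x\sqsubset y\Rightarrow\exists a,b\in P$, $x\in a\Rrightarrow b$, $y\in a$, $y\notin b$). $\mathbf{D\text{-}Frm}$: descriptive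 $\multimap$-frames with morphisms $f$ that are bounded for both relations (for $R\in\{\preceq,\sqsubset\}$: $xRy\Rightarrow f(x)Rf(y)$, and $f(x)Rz'\Rightarrow\exists z$, $xRz$, $f(z)=z'$) and satisfy $f^{-1}(a')\in P$ for all admissible $a'$ of the codomain. $(\cdot)^*$ sends $(X,\preceq,\sqsubset,P)$ to the HL-algebra $(P,\cap,\cup,\Rightarrow,\Rrightarrow,X,\emptyset)$ and $f$ to $f^{-1}$. $(\cdot)_*$ sends $\mathbb A$ to $(\mathrm{pf}A,\subseteq,\sqsubset,\tilde A)$, where $\mathrm{pf}A$ is the set of prime filters, $\tilde a=\{\mathfrak p\mid a\in\mathfrak p\}$, $\tilde A=\{\tilde a\mid a\in A\}$, and $\mathfrak p\sqsubset\mathfrak q$ iff $\forall a,b$ ($a\multimap b\in\mathfrak p$ and $a\in\mathfrak q$ imply $b\in\mathfrak q$); it sends $h$ to $h^{-1}$. *)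

theory Defs
  imports Main
begin

record 'a hla =
  hcar   :: "'a set"
  hmeet  :: "'a \<Rightarrow> 'a \<Rightarrow> 'a"
  hjoin  :: "'a \<Rightarrow> 'a \<Rightarrow> 'a"
  himp   :: "'a \<Rightarrow> 'a \<Rightarrow> 'a"
  hlew   :: "'a \<Rightarrow> 'a \<Rightarrow> 'a"
  htop   :: 'a
  hbot   :: 'a

definition hle :: "'a hla \<Rightarrow> 'a \<Rightarrow> 'a \<Rightarrow> bool" where
  "hle A a b \<longleftrightarrow> hmeet A a b = a"

definition is_heyting :: "'a hla \<Rightarrow> bool" where
  "is_heyting A \<longleftrightarrow>
     htop A \<in> hcar A \<and> hbot A \<in> hcar A \<and>
     (\<forall>a\<in>hcar A. \<forall>b\<in>hcar A. hmeet A a b \<in> hcar A \<and> hjoin A a b \<in> hcar A \<and>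
                               himp A a b \<in> hcar A \<and> hlew A a b \<in> hcar A) \<and>
     (\<forall>a\<in>hcar A. \<forall>b\<in>hcar A. \<forall>c\<in>hcar A.
        hmeet A a (hmeet A b c) = hmeet A (hmeet A a b) c \<and>
        hjoin A a (hjoin A b c) = hjoin A (hjoin A a b) c) \<and>
     (\<forall>a\<in>hcar A. \<forall>b\<in>hcar A.
        hmeet A a b = hmeet A b a \<and> hjoin A a b = hjoin A b a \<and>
        hmeet A a (hjoin A a b) = a \<and> hjoin A a (hmeet A a b) = a) \<and>
     (\<forall>a\<in>hcar A. hmeet A a (htop A) = a \<and> hjoin A a (hbot A) = a) \<and>
     (\<forall>a\<in>hcar A. \<forall>b\<in>hcar A. \<forall>c\<in>hcar A.
        hle A (hmeet A c a) b \<longleftrightarrow> hle A c (himp A a b))"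

definition is_hla :: "'a hla \<Rightarrow> bool" where
  "is_hla A \<longleftrightarrow> is_heyting A \<and>
     (\<forall>a\<in>hcar A. \<forall>b\<in>hcar A. \<forall>c\<in>hcar A.
        hmeet A (hlew A a b) (hlew A a c) = hlew A a (hmeet A b c) \<and>
        hmeet A (hlew A a c) (hlew A b c) = hlew A (hjoin A a b) c \<and>
        hle A (hmeet A (hlew A a b) (hlew A b c)) (hlew A a c)) \<and>
     (\<forall>a\<in>hcar A. hlew A a a = htop A)"

definition hla_hom :: "'a hla \<Rightarrow> 'b hla \<Rightarrow> ('a \<Rightarrow> 'b) \<Rightarrow> bool" where
  "hla_hom A B h \<longleftrightarrow>
     (\<forall>a\<in>hcar A. h a \<in> hcar B) \<and>
     h (htop A) = htop B \<and> h (hbot A) = hbot B \<and>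
     (\<forall>a\<in>hcar A. \<forall>b\<in>hcar A.
        h (hmeet A a b) = hmeet B (h a) (h b) \<and> h (hjoin A a b) = hjoin B (h a) (h b) \<and>
        h (himp A a b) = himp B (h a) (h b) \<and> h (hlew A a b) = hlew B (h a) (h b))"

definition hla_iso :: "'a hla \<Rightarrow> 'b hla \<Rightarrow> ('a \<Rightarrow> 'b) \<Rightarrow> bool" where
  "hla_iso A B h \<longleftrightarrow> hla_hom A B h \<and>
     (\<exists>g. hla_hom B A g \<and> (\<forall>a\<in>hcar A. g (h a) = a) \<and> (\<forall>b\<in>hcar B. h (g b) = b))"

record 'x gframe =
  pts :: "'x set"
  fle :: "'x \<Rightarrow> 'x \<Rightarrow> bool"
  fsq :: "'x \<Rightarrow> 'x \<Rightarrow> bool"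
  adm :: "'x set set"

definition is_upset :: "'x gframe \<Rightarrow> 'x set \<Rightarrow> bool" where
  "is_upset X a \<longleftrightarrow> a \<subseteq> pts X \<and> (\<forall>x\<in>a. \<forall>y\<in>pts X. fle X x y \<longrightarrow> y \<in> a)"

definition fimp :: "'x gframe \<Rightarrow> 'x set \<Rightarrow> 'x set \<Rightarrow> 'x set" where
  "fimp X a b = {x\<in>pts X. \<forall>y\<in>pts X. fle X x y \<and> y \<in> a \<longrightarrow> y \<in> b}"

definition flew :: "'x gframe \<Rightarrow> 'x set \<Rightarrow> 'x set \<Rightarrow> 'x set" where
  "flew X a b = {x\<in>pts X. \<forall>y\<in>pts X. fsq X x y \<and> y \<in> a \<longrightarrow> y \<in> b}"

definition lew_frame :: "'x gframe \<Rightarrow> bool" where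
  "lew_frame X \<longleftrightarrow>
     (\<forall>x y. fle X x y \<longrightarrow> x \<in> pts X \<and> y \<in> pts X) \<and>
     (\<forall>x y. fsq X x y \<longrightarrow> x \<in> pts X \<and> y \<in> pts X) \<and>
     (\<forall>x\<in>pts X. fle X x x) \<and>
     (\<forall>x y. fle X x y \<and> fle X y x \<longrightarrow> x = y) \<and>
     (\<forall>x y z. fle X x y \<and> fle X y z \<longrightarrow> fle X x z) \<and>
     (\<forall>x y z. fle X x y \<and> fsq X y z \<longrightarrow> fsq X x z)"

definition general_frame :: "'x gframe \<Rightarrow> bool" where
  "general_frame X \<longleftrightarrow> lew_frame X \<and>
     (\<forall>a\<in>adm X. is_upset X a) \<and> pts X \<in> adm X \<and> {} \<in> adm X \<and>
     (\<forall>a\<in>adm X. \<forall>b\<in>adm X. a \<inter> b \<in> adm X \<and> a \<union> b \<in> adm X \<and>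
                              fimp X a b \<in> adm X \<and> flew X a b \<in> adm X)"

definition fip :: "'x gframe \<Rightarrow> 'x set set \<Rightarrow> bool" where
  "fip X S \<longleftrightarrow> (\<forall>F. F \<subseteq> S \<and> finite F \<longrightarrow> pts X \<inter> \<Inter>F \<noteq> {})"

definition compact_frame :: "'x gframe \<Rightarrow> bool" where
  "compact_frame X \<longleftrightarrow>
     (\<forall>S. S \<subseteq> adm X \<union> {pts X - a | a. a \<in> adm X} \<and> fip X S \<longrightarrow> pts X \<inter> \<Inter>S \<noteq> {})"

definition descriptive_frame :: "'x gframe \<Rightarrow> bool" where
  "descriptive_frame X \<longleftrightarrow> general_frame X \<and> compact_frame X \<and>
     (\<forall>x\<in>pts X. \<forall>y\<in>pts X. \<not> fle X x y \<longrightarrow> (\<exists>a\<in>adm X. x \<in> a \<and> y \<notin> a)) \<and>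
     (\<forall>x\<in>pts X. \<forall>y\<in>pts X. \<not> fsq X x y \<longrightarrow>
        (\<exists>a\<in>adm X. \<exists>b\<in>adm X. x \<in> flew X a b \<and> y \<in> a \<and> y \<notin> b))"

definition bounded_for :: "'x gframe \<Rightarrow> 'y gframe \<Rightarrow> ('x \<Rightarrow> 'x \<Rightarrow> bool) \<Rightarrow> ('y \<Rightarrow> 'y \<Rightarrow> bool)
     \<Rightarrow> ('x \<Rightarrow> 'y) \<Rightarrow> bool" where
  "bounded_for X Y R R' f \<longleftrightarrow>
     (\<forall>x y. R x y \<longrightarrow> R' (f x) (f y)) \<and>
     (\<forall>x\<in>pts X. \<forall>z'. R' (f x) z' \<longrightarrow> (\<exists>z. R x z \<and> f z = z'))"

definition dframe_mor :: "'x gframe \<Rightarrow> 'y gframe \<Rightarrow> ('x \<Rightarrow> 'y) \<Rightarrow> bool" where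
  "dframe_mor X Y f \<longleftrightarrow>
     (\<forall>x\<in>pts X. f x \<in> pts Y) \<and>
     bounded_for X Y (fle X) (fle Y) f \<and> bounded_for X Y (fsq X) (fsq Y) f \<and>
     (\<forall>a'\<in>adm Y. {x\<in>pts X. f x \<in> a'} \<in> adm X)"

definition dframe_iso :: "'x gframe \<Rightarrow> 'y gframe \<Rightarrow> ('x \<Rightarrow> 'y) \<Rightarrow> bool" where
  "dframe_iso X Y f \<longleftrightarrow> dframe_mor X Y f \<and>
     (\<exists>g. dframe_mor Y X g \<and> (\<forall>x\<in>pts X. g (f x) = x) \<and> (\<forall>y\<in>pts Y. f (g y) = y))"

section \<open>The functor (.)^* : D-Frm -> HLAs\<close>

definition cplx_alg :: "'x gframe \<Rightarrow> 'x set hla" where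
  "cplx_alg X = \<lparr> hcar = adm X, hmeet = (\<inter>), hjoin = (\<union>), himp = fimp X, hlew = flew X,
                  htop = pts X, hbot = {} \<rparr>"

definition cplx_hom :: "'x gframe \<Rightarrow> ('x \<Rightarrow> 'y) \<Rightarrow> 'y set \<Rightarrow> 'x set" where
  "cplx_hom X f a' = {x\<in>pts X. f x \<in> a'}"

section \<open>The functor (.)_* : HLAs -> D-Frm\<close>

definition prime_filter :: "'a hla \<Rightarrow> 'a set \<Rightarrow> bool" where
  "prime_filter A p \<longleftrightarrow> p \<subseteq> hcar A \<and> htop A \<in> p \<and> hbot A \<notin> p \<and>
     (\<forall>a\<in>p. \<forall>b\<in>hcar A. hle A a b \<longrightarrow> b \<in> p) \<and>
     (\<forall>a\<in>p. \<forall>b\<in>p. hmeet A a b \<in> p) \<and>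
     (\<forall>a\<in>hcar A. \<forall>b\<in>hcar A. hjoin A a b \<in> p \<longrightarrow> a \<in> p \<or> b \<in> p)"

definition pf :: "'a hla \<Rightarrow> 'a set set" where
  "pf A = {p. prime_filter A p}"

definition tld :: "'a hla \<Rightarrow> 'a \<Rightarrow> 'a set set" where
  "tld A a = {p\<in>pf A. a \<in> p}"

definition pf_sq :: "'a hla \<Rightarrow> 'a set \<Rightarrow> 'a set \<Rightarrow> bool" where
  "pf_sq A p q \<longleftrightarrow> p \<in> pf A \<and> q \<in> pf A \<and>
     (\<forall>a\<in>hcar A. \<forall>b\<in>hcar A. hlew A a b \<in> p \<and> a \<in> q \<longrightarrow> b \<in> q)"

definition dual_frame :: "'a hla \<Rightarrow> 'a set gframe" where
  "dual_frame A = \<lparr> pts = pf A, fle = (\<lambda>p q. p \<in> pf A \<and> q \<in> pf A \<and> p \<subseteq> q),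
                    fsq = pf_sq A, adm = tld A ` hcar A \<rparr>"

definition dual_hom :: "'a hla \<Rightarrow> ('a \<Rightarrow> 'b) \<Rightarrow> 'b set \<Rightarrow> 'a set" where
  "dual_hom A h q = {a\<in>hcar A. h a \<in> q}"

definition eta :: "'a hla \<Rightarrow> 'a \<Rightarrow> 'a set set" where
  "eta A = tld A"

definition epsilon :: "'x gframe \<Rightarrow> 'x \<Rightarrow> 'x set set" where
  "epsilon X x = {a\<in>adm X. x \<in> a}"

end

theory Submission
  imports Defs
begin


lemma df_simps[simp]: "pts (dual_frame A) = pf A" "fle (dual_frame A) = (\<lambda>p q. p \<in> pf A \<and> q \<in> pf A \<and> p \<subseteq> q)"
  "fsq (dual_frame A) = pf_sq A" "adm (dual_frame A) = tld A ` hcar A"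
  unfolding dual_frame_def by simp_all

locale heyt =
  fixes A :: "'a hla"
  assumes H: "is_heyting A"
begin

abbreviation "car \<equiv> hcar A"
abbreviation "m \<equiv> hmeet A"
abbreviation "j \<equiv> hjoin A"
abbreviation "im \<equiv> himp A"
abbreviation "lw \<equiv> hlew A"
abbreviation "tp \<equiv> htop A"
abbreviation "bt \<equiv> hbot A"
abbreviation "le \<equiv> hle A"

lemma Hf: "tp \<in> car \<and> bt \<in> car \<and>
     (\<forall>a\<in>car. \<forall>b\<in>car. m a b \<in> car \<and> j a b \<in> car \<and> im a b \<in> car \<and> lw a b \<in> car) \<and>
     (\<forall>a\<in>car. \<forall>b\<in>car. \<forall>c\<in>car. m a (m b c) = m (m a b) c \<and> j a (j b c) = j (j a b) c) \<and>
     (\<forall>a\<in>car. \<forall>b\<in>car. m a b = m b a \<and> j a b = j b a \<and> m a (j a b) = a \<and> j a (m a b) = a) \<and>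
     (\<forall>a\<in>car. m a tp = a \<and> j a bt = a) \<and>
     (\<forall>a\<in>car. \<forall>b\<in>car. \<forall>c\<in>car. le (m c a) b \<longleftrightarrow> le c (im a b))"
  using H unfolding is_heyting_def .

lemma tp_c[simp]: "tp \<in> car" using Hf by blast
lemma bt_c[simp]: "bt \<in> car" using Hf by blast
lemma m_c[simp]: "a \<in> car \<Longrightarrow> b \<in> car \<Longrightarrow> m a b \<in> car" using Hf by blast
lemma j_c[simp]: "a \<in> car \<Longrightarrow> b \<in> car \<Longrightarrow> j a b \<in> car" using Hf by blast
lemma im_c[simp]: "a \<in> car \<Longrightarrow> b \<in> car \<Longrightarrow> im a b \<in> car" using Hf by blast
lemma lw_c[simp]: "a \<in> car \<Longrightarrow> b \<in> car \<Longrightarrow> lw a b \<in> car" using Hf by blast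
lemma m_assoc: "a \<in> car \<Longrightarrow> b \<in> car \<Longrightarrow> c \<in> car \<Longrightarrow> m a (m b c) = m (m a b) c" using Hf by blast
lemma j_assoc: "a \<in> car \<Longrightarrow> b \<in> car \<Longrightarrow> c \<in> car \<Longrightarrow> j a (j b c) = j (j a b) c" using Hf by blast
lemma m_comm: "a \<in> car \<Longrightarrow> b \<in> car \<Longrightarrow> m a b = m b a" using Hf by blast
lemma j_comm: "a \<in> car \<Longrightarrow> b \<in> car \<Longrightarrow> j a b = j b a" using Hf by blast
lemma absorb1: "a \<in> car \<Longrightarrow> b \<in> car \<Longrightarrow> m a (j a b) = a" using Hf by blast
lemma absorb2: "a \<in> car \<Longrightarrow> b \<in> car \<Longrightarrow> j a (m a b) = a" using Hf by blast
lemma m_tp: "a \<in> car \<Longrightarrow> m a tp = a" using Hf by blast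
lemma j_bt: "a \<in> car \<Longrightarrow> j a bt = a" using Hf by blast
lemma resid: "a \<in> car \<Longrightarrow> b \<in> car \<Longrightarrow> c \<in> car \<Longrightarrow> le (m c a) b \<longleftrightarrow> le c (im a b)" using Hf by blast

lemma m_idem: "a \<in> car \<Longrightarrow> m a a = a"
  by (metis absorb1 absorb2 m_c)

lemma le_refl: "a \<in> car \<Longrightarrow> le a a"
  by (simp add: hle_def m_idem)

lemma le_antisym: "a \<in> car \<Longrightarrow> b \<in> car \<Longrightarrow> le a b \<Longrightarrow> le b a \<Longrightarrow> a = b"
  by (metis hle_def m_comm)

lemma le_trans: "a \<in> car \<Longrightarrow> b \<in> car \<Longrightarrow> c \<in> car \<Longrightarrow> le a b \<Longrightarrow> le b c \<Longrightarrow> le a c"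
  unfolding hle_def by (metis m_assoc)

lemma le_j: "a \<in> car \<Longrightarrow> b \<in> car \<Longrightarrow> le a b \<longleftrightarrow> j a b = b"
  unfolding hle_def by (metis absorb1 absorb2 j_comm m_comm)

lemma m_lb1: "a \<in> car \<Longrightarrow> b \<in> car \<Longrightarrow> le (m a b) a"
  unfolding hle_def by (metis m_assoc m_comm m_idem)

lemma m_lb2: "a \<in> car \<Longrightarrow> b \<in> car \<Longrightarrow> le (m a b) b"
  by (metis m_comm m_lb1)

lemma m_glb: "a \<in> car \<Longrightarrow> b \<in> car \<Longrightarrow> c \<in> car \<Longrightarrow> le c a \<Longrightarrow> le c b \<Longrightarrow> le c (m a b)"
  unfolding hle_def by (metis m_assoc)

lemma m_le_iff: "a \<in> car \<Longrightarrow> b \<in> car \<Longrightarrow> c \<in> car \<Longrightarrow> le c (m a b) \<longleftrightarrow> le c a \<and> le c b"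
  by (meson m_c m_glb m_lb1 m_lb2 le_trans)

lemma j_ub1: "a \<in> car \<Longrightarrow> b \<in> car \<Longrightarrow> le a (j a b)"
  by (metis j_assoc j_c le_j le_refl)

lemma j_ub2: "a \<in> car \<Longrightarrow> b \<in> car \<Longrightarrow> le b (j a b)"
  by (metis j_comm j_ub1)

lemma j_lub: "a \<in> car \<Longrightarrow> b \<in> car \<Longrightarrow> c \<in> car \<Longrightarrow> le a c \<Longrightarrow> le b c \<Longrightarrow> le (j a b) c"
proof -
  assume a: "a \<in> car" "b \<in> car" "c \<in> car" "le a c" "le b c"
  hence "j a c = c" "j b c = c" using le_j by auto
  hence "j (j a b) c = c" using a j_assoc by metis
  thus ?thesis using a le_j by simp
qed

lemma j_le_iff: "a \<in> car \<Longrightarrow> b \<in> car \<Longrightarrow> c \<in> car \<Longrightarrow> le (j a b) c \<longleftrightarrow> le a c \<and> le b c"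
  by (meson j_c j_lub j_ub1 j_ub2 le_trans)

lemma le_tp: "a \<in> car \<Longrightarrow> le a tp"
  by (simp add: hle_def m_tp)

lemma bt_le: "a \<in> car \<Longrightarrow> le bt a"
  by (metis j_bt j_comm le_j bt_c)

lemma mp: "a \<in> car \<Longrightarrow> b \<in> car \<Longrightarrow> le (m a (im a b)) b"
proof -
  assume a: "a \<in> car" "b \<in> car"
  have "le (m (im a b) a) b" using resid[of a b "im a b"] a le_refl by simp
  thus ?thesis using a m_comm by simp
qed

lemma distr_le:
  assumes "i \<in> car" "c \<in> car" "k \<in> car" "d \<in> car"
  shows "le (m (j i c) (j k d)) (j (j i k) (m c d))"
proof -
  let ?T = "j (j i k) (m c d)"
  have T: "?T \<in> car" using assms by simp
  have iT: "le i ?T" using assms j_ub1 le_trans by (meson j_c m_c)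
  have kT: "le k ?T" using assms j_ub1 j_ub2 le_trans by (meson j_c m_c)
  have cdT: "le (m c d) ?T" using assms j_ub2 by simp
  have "le (m i (j k d)) i" using assms m_lb1 by simp
  hence "le (m i (j k d)) ?T" using iT assms le_trans[of "m i (j k d)" i ?T] by simp
  hence 1: "le i (im (j k d) ?T)" using resid[of "j k d" ?T i] assms by simp
  have "le (m k c) k" using assms m_lb1 by simp
  hence "le (m k c) ?T" using kT assms le_trans[of "m k c" k ?T] by simp
  hence 2: "le k (im c ?T)" using resid[of c ?T k] assms by simp
  have "le (m d c) ?T" using cdT m_comm[of c d] assms by simp
  hence 3: "le d (im c ?T)" using resid[of c ?T d] assms by simp
  have "le (j k d) (im c ?T)" using 2 3 assms by (simp add: j_lub)
  hence "le (m (j k d) c) ?T" using resid[of c ?T "j k d"] assms by simp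
  hence "le (m c (j k d)) ?T" using m_comm[of c "j k d"] assms by simp
  hence 4: "le c (im (j k d) ?T)" using resid[of "j k d" ?T c] assms by simp
  have "le (j i c) (im (j k d) ?T)" using 1 4 assms by (simp add: j_lub)
  thus ?thesis using assms resid[of "j k d" ?T "j i c"] by simp
qed

lemma prime_ext:
  fixes R :: "'a \<Rightarrow> 'a \<Rightarrow> bool" and F I :: "'a set"
  assumes Rrefl: "\<And>x. x \<in> car \<Longrightarrow> R x x"
    and Rtrans: "\<And>x y z. x \<in> car \<Longrightarrow> y \<in> car \<Longrightarrow> z \<in> car \<Longrightarrow> R x y \<Longrightarrow> R y z \<Longrightarrow> R x z"
    and Ranti: "\<And>x x' y. x \<in> car \<Longrightarrow> x' \<in> car \<Longrightarrow> y \<in> car \<Longrightarrow> le x' x \<Longrightarrow> R x y \<Longrightarrow> R x' y"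
    and Rmono: "\<And>x y y'. x \<in> car \<Longrightarrow> y \<in> car \<Longrightarrow> y' \<in> car \<Longrightarrow> le y y' \<Longrightarrow> R x y \<Longrightarrow> R x y'"
    and Rjoin: "\<And>x1 x2 y. x1 \<in> car \<Longrightarrow> x2 \<in> car \<Longrightarrow> y \<in> car \<Longrightarrow> R x1 y \<Longrightarrow> R x2 y \<Longrightarrow> R (j x1 x2) y"
    and Rmeet: "\<And>x y1 y2. x \<in> car \<Longrightarrow> y1 \<in> car \<Longrightarrow> y2 \<in> car \<Longrightarrow> R x y1 \<Longrightarrow> R x y2 \<Longrightarrow> R x (m y1 y2)"
    and Fc: "F \<subseteq> car" and Ftp: "tp \<in> F"
    and Fup: "\<And>x y. x \<in> F \<Longrightarrow> y \<in> car \<Longrightarrow> le x y \<Longrightarrow> y \<in> F"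
    and Fm: "\<And>x y. x \<in> F \<Longrightarrow> y \<in> F \<Longrightarrow> m x y \<in> F"
    and Ic: "I \<subseteq> car" and Ibt: "bt \<in> I"
    and Ij: "\<And>x y. x \<in> I \<Longrightarrow> y \<in> I \<Longrightarrow> j x y \<in> I"
    and IR: "\<And>x y. x \<in> car \<Longrightarrow> y \<in> I \<Longrightarrow> R x y \<Longrightarrow> x \<in> I"
    and disj: "F \<inter> I = {}"
  shows "\<exists>q. prime_filter A q \<and> F \<subseteq> q \<and> q \<inter> I = {} \<and>
             (\<forall>x\<in>car. \<forall>y\<in>car. R x y \<and> x \<in> q \<longrightarrow> y \<in> q)"
proof -
  define cid where "cid K \<longleftrightarrow> K \<subseteq> car \<and> bt \<in> K \<and> (\<forall>x\<in>K. \<forall>y\<in>K. j x y \<in> K) \<and>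
      (\<forall>x\<in>car. \<forall>y\<in>K. R x y \<longrightarrow> x \<in> K)" for K
  define S where "S = {K. cid K \<and> I \<subseteq> K \<and> F \<inter> K = {}}"
  have IS: "I \<in> S" unfolding S_def cid_def using Ic Ibt Ij IR disj by auto
  have "\<exists>M\<in>S. \<forall>X\<in>S. M \<subseteq> X \<longrightarrow> X = M"
  proof (rule subset_Zorn_nonempty)
    show "S \<noteq> {}" using IS by auto
  next
    fix C assume Cne: "C \<noteq> {}" and ch: "subset.chain S C"
    have CS: "C \<subseteq> S" and tot: "\<forall>X\<in>C. \<forall>Y\<in>C. X \<subseteq> Y \<or> Y \<subseteq> X"
      using ch unfolding subset.chain_def by auto
    have "\<Union>C \<subseteq> car" using CS unfolding S_def cid_def by auto
    moreover have "bt \<in> \<Union>C" using CS Cne unfolding S_def cid_def by auto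
    moreover have "\<forall>x\<in>\<Union>C. \<forall>y\<in>\<Union>C. j x y \<in> \<Union>C"
    proof (intro ballI)
      fix x y assume "x \<in> \<Union>C" "y \<in> \<Union>C"
      then obtain X Y where XY: "X \<in> C" "Y \<in> C" "x \<in> X" "y \<in> Y" by auto
      show "j x y \<in> \<Union>C"
      proof (cases "X \<subseteq> Y")
        case True
        hence "j x y \<in> Y" using XY CS unfolding S_def cid_def by blast
        thus ?thesis using XY by auto
      next
        case False
        hence "Y \<subseteq> X" using tot XY by blast
        hence "j x y \<in> X" using XY CS unfolding S_def cid_def by blast
        thus ?thesis using XY by auto
      qed
    qed
    moreover have "\<forall>x\<in>car. \<forall>y\<in>\<Union>C. R x y \<longrightarrow> x \<in> \<Union>C"
      using CS unfolding S_def cid_def by blast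
    moreover have "I \<subseteq> \<Union>C" using CS Cne unfolding S_def by auto
    moreover have "F \<inter> \<Union>C = {}" using CS unfolding S_def by auto
    ultimately have "\<Union>C \<in> S" unfolding S_def cid_def by auto
    thus "\<Union>C \<in> S" .
  qed
  then obtain K where KS: "K \<in> S" and Kmax: "\<And>X. X \<in> S \<Longrightarrow> K \<subseteq> X \<Longrightarrow> X = K" by blast
  have Kc: "K \<subseteq> car" and Kbt: "bt \<in> K" and Kj: "\<And>x y. x \<in> K \<Longrightarrow> y \<in> K \<Longrightarrow> j x y \<in> K"
    and KR: "\<And>x y. x \<in> car \<Longrightarrow> y \<in> K \<Longrightarrow> R x y \<Longrightarrow> x \<in> K"
    and IK: "I \<subseteq> K" and FK: "F \<inter> K = {}"
    using KS unfolding S_def cid_def by auto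
  have ext: "\<exists>f\<in>F. \<exists>k\<in>K. R f (j k c)" if c: "c \<in> car" "c \<notin> K" for c
  proof (rule ccontr)
    assume nex: "\<not> ?thesis"
    define Kc' where "Kc' = {x\<in>car. \<exists>k\<in>K. R x (j k c)}"
    have sub: "K \<subseteq> Kc'"
    proof
      fix k assume k: "k \<in> K"
      hence kc: "k \<in> car" using Kc by auto
      have "R k (j k c)" using Rmono[of k k "j k c"] Rrefl[OF kc] kc c j_ub1 by simp
      thus "k \<in> Kc'" unfolding Kc'_def using k kc by auto
    qed
    have "cid Kc'" unfolding cid_def
    proof (intro conjI ballI impI)
      show "Kc' \<subseteq> car" unfolding Kc'_def by auto
      show "bt \<in> Kc'" using sub Kbt by auto
    next
      fix x y assume "x \<in> Kc'" "y \<in> Kc'"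
      then obtain k1 k2 where x: "x \<in> car" "k1 \<in> K" "R x (j k1 c)" and y: "y \<in> car" "k2 \<in> K" "R y (j k2 c)"
        unfolding Kc'_def by auto
      have k12: "k1 \<in> car" "k2 \<in> car" using x y Kc by auto
      have "le (j k1 c) (j (j k1 k2) c)" using k12 c j_ub1 j_ub2 j_le_iff[of k1 c "j (j k1 k2) c"]
        le_trans[of k1 "j k1 k2" "j (j k1 k2) c"] by simp
      hence 1: "R x (j (j k1 k2) c)" using Rmono[of x "j k1 c" "j (j k1 k2) c"] x k12 c by simp
      have "le (j k2 c) (j (j k1 k2) c)" using k12 c j_ub1 j_ub2 j_le_iff[of k2 c "j (j k1 k2) c"]
        le_trans[of k2 "j k1 k2" "j (j k1 k2) c"] by simp
      hence 2: "R y (j (j k1 k2) c)" using Rmono[of y "j k2 c" "j (j k1 k2) c"] y k12 c by simp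
      have "R (j x y) (j (j k1 k2) c)" using Rjoin[of x y "j (j k1 k2) c"] 1 2 x y k12 c by simp
      moreover have "j k1 k2 \<in> K" using Kj x y by auto
      ultimately show "j x y \<in> Kc'" unfolding Kc'_def using x y by auto
    next
      fix x y assume x: "x \<in> car" and y: "y \<in> Kc'" and r: "R x y"
      then obtain k where k: "k \<in> K" "R y (j k c)" "y \<in> car" unfolding Kc'_def by auto
      have "R x (j k c)" using Rtrans[of x y "j k c"] x k r c Kc by auto
      thus "x \<in> Kc'" unfolding Kc'_def using x k by auto
    qed
    moreover have "F \<inter> Kc' = {}" using nex unfolding Kc'_def by auto
    ultimately have "Kc' \<in> S" using sub IK unfolding S_def by auto
    hence "Kc' = K" using Kmax sub by auto
    moreover have "c \<in> Kc'"
    proof -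
      have "le c (j bt c)" using c j_ub2 by simp
      hence "R c (j bt c)" using Rmono[of c c "j bt c"] Rrefl c by simp
      thus ?thesis unfolding Kc'_def using c Kbt by auto
    qed
    ultimately show False using c by auto
  qed
  have prime: False if cd: "c \<in> car" "d \<in> car" "c \<notin> K" "d \<notin> K" "m c d \<in> K" for c d
  proof -
    obtain f1 k1 where f1: "f1 \<in> F" "k1 \<in> K" "R f1 (j k1 c)" using ext cd by blast
    obtain f2 k2 where f2: "f2 \<in> F" "k2 \<in> K" "R f2 (j k2 d)" using ext cd by blast
    have c12: "f1 \<in> car" "f2 \<in> car" "k1 \<in> car" "k2 \<in> car" using f1 f2 Fc Kc by auto
    have fF: "m f1 f2 \<in> F" using Fm f1 f2 by auto
    have a1: "R (m f1 f2) (j k1 c)" using Ranti[of f1 "m f1 f2" "j k1 c"] c12 cd f1 m_lb1 by simp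
    have a2: "R (m f1 f2) (j k2 d)" using Ranti[of f2 "m f1 f2" "j k2 d"] c12 cd f2 m_lb2 by simp
    have "R (m f1 f2) (m (j k1 c) (j k2 d))" using Rmeet[of "m f1 f2" "j k1 c" "j k2 d"] a1 a2 c12 cd by simp
    hence "R (m f1 f2) (j (j k1 k2) (m c d))" using Rmono[of "m f1 f2" "m (j k1 c) (j k2 d)" "j (j k1 k2) (m c d)"] distr_le c12 cd by simp
    moreover have "j (j k1 k2) (m c d) \<in> K" using Kj f1 f2 cd by auto
    ultimately have "m f1 f2 \<in> K" using KR[of "m f1 f2" "j (j k1 k2) (m c d)"] c12 by simp
    thus False using fF FK by auto
  qed
  define q where "q = car - K"
  have "prime_filter A q" unfolding prime_filter_def
  proof (intro conjI ballI impI)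
    show "q \<subseteq> car" unfolding q_def by auto
    show "tp \<in> q" unfolding q_def using Ftp FK by auto
    show "bt \<notin> q" unfolding q_def using Kbt by auto
  next
    fix a b assume a: "a \<in> q" and b: "b \<in> car" and ab: "le a b"
    show "b \<in> q"
    proof (rule ccontr)
      assume "b \<notin> q"
      hence "b \<in> K" using b unfolding q_def by auto
      moreover have "R a b" using Rmono[of a a b] Rrefl a b ab unfolding q_def by auto
      ultimately have "a \<in> K" using KR a unfolding q_def by auto
      thus False using a unfolding q_def by auto
    qed
  next
    fix a b assume ab: "a \<in> q" "b \<in> q"
    hence ab': "a \<in> car" "b \<in> car" "a \<notin> K" "b \<notin> K" unfolding q_def by auto
    hence "m a b \<notin> K" using prime[of a b] by blast
    thus "m a b \<in> q" unfolding q_def using ab' by simp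
  next
    fix a b assume ab: "a \<in> car" "b \<in> car" "j a b \<in> q"
    show "a \<in> q \<or> b \<in> q"
    proof (rule ccontr)
      assume "\<not> (a \<in> q \<or> b \<in> q)"
      hence "a \<in> K" "b \<in> K" using ab unfolding q_def by auto
      hence "j a b \<in> K" using Kj by blast
      thus False using ab unfolding q_def by blast
    qed
  qed
  moreover have "F \<subseteq> q" unfolding q_def using Fc FK by auto
  moreover have "q \<inter> I = {}" unfolding q_def using IK by auto
  moreover have "\<forall>x\<in>car. \<forall>y\<in>car. R x y \<and> x \<in> q \<longrightarrow> y \<in> q"
  proof (intro ballI impI)
    fix x y assume xy: "x \<in> car" "y \<in> car" "R x y \<and> x \<in> q"
    show "y \<in> q"
    proof (rule ccontr)
      assume "y \<notin> q"
      hence "y \<in> K" using xy unfolding q_def by blast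
      hence "x \<in> K" using KR[of x y] xy by blast
      thus False using xy unfolding q_def by blast
    qed
  qed
  ultimately have "prime_filter A q \<and> F \<subseteq> q \<and> q \<inter> I = {} \<and>
             (\<forall>x\<in>car. \<forall>y\<in>car. R x y \<and> x \<in> q \<longrightarrow> y \<in> q)" by (intro conjI)
  thus ?thesis by (rule exI)
qed

lemma prime_ext_le:
  fixes F I :: "'a set"
  assumes Fc: "F \<subseteq> car" and Ftp: "tp \<in> F"
    and Fup: "\<And>x y. x \<in> F \<Longrightarrow> y \<in> car \<Longrightarrow> le x y \<Longrightarrow> y \<in> F"
    and Fm: "\<And>x y. x \<in> F \<Longrightarrow> y \<in> F \<Longrightarrow> m x y \<in> F"
    and Ic: "I \<subseteq> car" and Ibt: "bt \<in> I"
    and Ij: "\<And>x y. x \<in> I \<Longrightarrow> y \<in> I \<Longrightarrow> j x y \<in> I"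
    and Idown: "\<And>x y. x \<in> car \<Longrightarrow> y \<in> I \<Longrightarrow> le x y \<Longrightarrow> x \<in> I"
    and disj: "F \<inter> I = {}"
  shows "\<exists>q. prime_filter A q \<and> F \<subseteq> q \<and> q \<inter> I = {}"
proof -
  have "\<exists>q. prime_filter A q \<and> F \<subseteq> q \<and> q \<inter> I = {} \<and>
             (\<forall>x\<in>car. \<forall>y\<in>car. le x y \<and> x \<in> q \<longrightarrow> y \<in> q)"
  proof (rule prime_ext[OF _ _ _ _ _ _ Fc Ftp Fup Fm Ic Ibt Ij Idown disj])
    show "\<And>x. x \<in> car \<Longrightarrow> le x x" by (rule le_refl)
    show "\<And>x y z. x \<in> car \<Longrightarrow> y \<in> car \<Longrightarrow> z \<in> car \<Longrightarrow> le x y \<Longrightarrow> le y z \<Longrightarrow> le x z"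
      by (rule le_trans)
    show "\<And>x x' y. x \<in> car \<Longrightarrow> x' \<in> car \<Longrightarrow> y \<in> car \<Longrightarrow> le x' x \<Longrightarrow> le x y \<Longrightarrow> le x' y"
      using le_trans by blast
    show "\<And>x y y'. x \<in> car \<Longrightarrow> y \<in> car \<Longrightarrow> y' \<in> car \<Longrightarrow> le y y' \<Longrightarrow> le x y \<Longrightarrow> le x y'"
      using le_trans by blast
    show "\<And>x1 x2 y. x1 \<in> car \<Longrightarrow> x2 \<in> car \<Longrightarrow> y \<in> car \<Longrightarrow> le x1 y \<Longrightarrow> le x2 y \<Longrightarrow> le (j x1 x2) y"
      by (rule j_lub)
    show "\<And>x y1 y2. x \<in> car \<Longrightarrow> y1 \<in> car \<Longrightarrow> y2 \<in> car \<Longrightarrow> le x y1 \<Longrightarrow> le x y2 \<Longrightarrow> le x (m y1 y2)"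
      by (rule m_glb)
  qed
  thus ?thesis by blast
qed

lemma pf_props:
  assumes "p \<in> pf A"
  shows "p \<subseteq> car" "tp \<in> p" "bt \<notin> p"
    "\<And>a b. a \<in> p \<Longrightarrow> b \<in> car \<Longrightarrow> le a b \<Longrightarrow> b \<in> p"
    "\<And>a b. a \<in> p \<Longrightarrow> b \<in> p \<Longrightarrow> m a b \<in> p"
    "\<And>a b. a \<in> car \<Longrightarrow> b \<in> car \<Longrightarrow> j a b \<in> p \<Longrightarrow> a \<in> p \<or> b \<in> p"
  using assms unfolding pf_def prime_filter_def by blast+

lemma pf_meet_iff: "p \<in> pf A \<Longrightarrow> a \<in> car \<Longrightarrow> b \<in> car \<Longrightarrow> m a b \<in> p \<longleftrightarrow> a \<in> p \<and> b \<in> p"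
  using pf_props[of p] m_lb1 m_lb2 by (meson m_c)

lemma pf_join_iff: "p \<in> pf A \<Longrightarrow> a \<in> car \<Longrightarrow> b \<in> car \<Longrightarrow> j a b \<in> p \<longleftrightarrow> a \<in> p \<or> b \<in> p"
  using pf_props[of p] j_ub1 j_ub2 by (meson j_c)

lemma sep:
  assumes a: "a \<in> car" and b: "b \<in> car" and nab: "\<not> le a b"
  shows "\<exists>q\<in>pf A. a \<in> q \<and> b \<notin> q"
proof -
  have "\<exists>q. prime_filter A q \<and> {y\<in>car. le a y} \<subseteq> q \<and> q \<inter> {y\<in>car. le y b} = {}"
  proof (rule prime_ext_le)
    show "tp \<in> {y \<in> car. le a y}" using a le_tp by simp
    show "\<And>x y. x \<in> {y \<in> car. le a y} \<Longrightarrow> y \<in> car \<Longrightarrow> le x y \<Longrightarrow> y \<in> {y \<in> car. le a y}"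
      using a le_trans by blast
    show "\<And>x y. x \<in> {y \<in> car. le a y} \<Longrightarrow> y \<in> {y \<in> car. le a y} \<Longrightarrow> m x y \<in> {y \<in> car. le a y}"
      using a m_glb by simp
    show "bt \<in> {y \<in> car. le y b}" using b bt_le by simp
    show "\<And>x y. x \<in> {y \<in> car. le y b} \<Longrightarrow> y \<in> {y \<in> car. le y b} \<Longrightarrow> j x y \<in> {y \<in> car. le y b}"
      using b j_lub by simp
    show "\<And>x y. x \<in> car \<Longrightarrow> y \<in> {y \<in> car. le y b} \<Longrightarrow> le x y \<Longrightarrow> x \<in> {y \<in> car. le y b}"
      using b le_trans by blast
    show "{y \<in> car. le a y} \<inter> {y \<in> car. le y b} = {}" using a b nab le_trans by blast
  qed auto
  then obtain q where "prime_filter A q" "{y\<in>car. le a y} \<subseteq> q" "q \<inter> {y\<in>car. le y b} = {}" by blast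
  thus ?thesis using a b le_refl unfolding pf_def by blast
qed

lemma tld_inj: "a \<in> car \<Longrightarrow> b \<in> car \<Longrightarrow> tld A a = tld A b \<Longrightarrow> a = b"
proof -
  assume ab: "a \<in> car" "b \<in> car" "tld A a = tld A b"
  have "le a b"
  proof (rule ccontr)
    assume "\<not> le a b"
    then obtain q where "q \<in> pf A" "a \<in> q" "b \<notin> q" using sep ab by blast
    thus False using ab(3) unfolding tld_def by blast
  qed
  moreover have "le b a"
  proof (rule ccontr)
    assume "\<not> le b a"
    then obtain q where "q \<in> pf A" "b \<in> q" "a \<notin> q" using sep ab by blast
    thus False using ab(3) unfolding tld_def by blast
  qed
  ultimately show "a = b" using le_antisym ab by simp
qed

lemma tld_tp: "tld A tp = pf A" unfolding tld_def using pf_props(2) by auto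
lemma tld_bt: "tld A bt = {}" unfolding tld_def using pf_props(3) by auto
lemma tld_meet: "a \<in> car \<Longrightarrow> b \<in> car \<Longrightarrow> tld A (m a b) = tld A a \<inter> tld A b"
  unfolding tld_def using pf_meet_iff by auto
lemma tld_join: "a \<in> car \<Longrightarrow> b \<in> car \<Longrightarrow> tld A (j a b) = tld A a \<union> tld A b"
  unfolding tld_def using pf_join_iff by auto

lemma tld_imp:
  assumes a: "a \<in> car" and b: "b \<in> car"
  shows "tld A (im a b) = fimp (dual_frame A) (tld A a) (tld A b)"
proof
  show "tld A (im a b) \<subseteq> fimp (dual_frame A) (tld A a) (tld A b)"
  proof
    fix p assume "p \<in> tld A (im a b)"
    hence p: "p \<in> pf A" "im a b \<in> p" unfolding tld_def by auto
    have "b \<in> q" if q: "q \<in> pf A" "p \<subseteq> q" "a \<in> q" for q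
    proof -
      have "m a (im a b) \<in> q" using pf_props(5)[OF q(1)] q p by auto
      thus ?thesis using pf_props(4)[OF q(1)] mp a b by simp
    qed
    thus "p \<in> fimp (dual_frame A) (tld A a) (tld A b)"
      unfolding fimp_def dual_frame_def tld_def using p by auto
  qed
next
  show "fimp (dual_frame A) (tld A a) (tld A b) \<subseteq> tld A (im a b)"
  proof
    fix p assume pin: "p \<in> fimp (dual_frame A) (tld A a) (tld A b)"
    hence p: "p \<in> pf A" and pq: "\<And>q. q \<in> pf A \<Longrightarrow> p \<subseteq> q \<Longrightarrow> a \<in> q \<Longrightarrow> b \<in> q"
      unfolding fimp_def dual_frame_def tld_def by auto
    have pc: "p \<subseteq> car" using pf_props(1)[OF p] .
    show "p \<in> tld A (im a b)"
    proof (rule ccontr)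
      assume nin: "p \<notin> tld A (im a b)"
      hence nimp: "im a b \<notin> p" using p unfolding tld_def by auto
      let ?F = "{y\<in>car. \<exists>x\<in>p. le (m x a) y}"
      let ?I = "{y\<in>car. le y b}"
      have "\<exists>q. prime_filter A q \<and> ?F \<subseteq> q \<and> q \<inter> ?I = {}"
      proof (rule prime_ext_le)
        show "tp \<in> ?F" using pf_props(2)[OF p] a m_lb1[of tp a] by auto
        show "\<And>x y. x \<in> ?F \<Longrightarrow> y \<in> car \<Longrightarrow> le x y \<Longrightarrow> y \<in> ?F"
        proof -
          fix x y assume "x \<in> ?F" "y \<in> car" "le x y"
          then obtain z where "x \<in> car" "z \<in> p" "le (m z a) x" by auto
          moreover have "z \<in> car" using \<open>z \<in> p\<close> pc by auto
          ultimately have "le (m z a) y" using \<open>y \<in> car\<close> \<open>le x y\<close> le_trans[of "m z a" x y] a by simp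
          thus "y \<in> ?F" using \<open>y \<in> car\<close> \<open>z \<in> p\<close> by auto
        qed
        show "\<And>x y. x \<in> ?F \<Longrightarrow> y \<in> ?F \<Longrightarrow> m x y \<in> ?F"
        proof -
          fix x y assume "x \<in> ?F" "y \<in> ?F"
          then obtain z1 z2 where z: "x \<in> car" "z1 \<in> p" "le (m z1 a) x" "y \<in> car" "z2 \<in> p" "le (m z2 a) y" by auto
          have zc: "z1 \<in> car" "z2 \<in> car" using z pc by auto
          have "le (m (m z1 z2) a) (m z1 a)" using zc a m_lb1 m_lb2 m_glb m_c le_trans by meson
          hence 1: "le (m (m z1 z2) a) x" using le_trans[of _ "m z1 a" x] z zc a by simp
          have "le (m (m z1 z2) a) (m z2 a)" using zc a m_lb1 m_lb2 m_glb m_c le_trans by meson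
          hence 2: "le (m (m z1 z2) a) y" using le_trans[of _ "m z2 a" y] z zc a by simp
          have "le (m (m z1 z2) a) (m x y)" using 1 2 m_glb z zc a by simp
          moreover have "m z1 z2 \<in> p" using pf_props(5)[OF p] z by auto
          ultimately show "m x y \<in> ?F" using z by auto
        qed
        show "bt \<in> ?I" using b bt_le by simp
        show "\<And>x y. x \<in> ?I \<Longrightarrow> y \<in> ?I \<Longrightarrow> j x y \<in> ?I" using b j_lub by simp
        show "\<And>x y. x \<in> car \<Longrightarrow> y \<in> ?I \<Longrightarrow> le x y \<Longrightarrow> x \<in> ?I" using b le_trans by blast
        show "?F \<inter> ?I = {}"
        proof (rule ccontr)
          assume "?F \<inter> ?I \<noteq> {}"
          then obtain y z where yz: "y \<in> car" "z \<in> p" "le (m z a) y" "le y b" by auto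
          have zc: "z \<in> car" using yz pc by auto
          have "le (m z a) b" using le_trans[of "m z a" y b] yz zc a b by simp
          hence "le z (im a b)" using resid zc a b by simp
          hence "im a b \<in> p" using pf_props(4)[OF p] yz a b by simp
          thus False using nimp by simp
        qed
      qed auto
      then obtain q where q: "prime_filter A q" "?F \<subseteq> q" "q \<inter> ?I = {}" by blast
      have qp: "q \<in> pf A" using q unfolding pf_def by simp
      have "p \<subseteq> q"
      proof
        fix x assume "x \<in> p"
        hence "x \<in> ?F" using pc a m_lb1 by auto
        thus "x \<in> q" using q by auto
      qed
      moreover have "a \<in> q"
      proof -
        have "le (m tp a) a" using a m_tp m_comm[of tp a] le_refl by simp
        hence "a \<in> ?F" using pf_props(2)[OF p] a by blast
        thus ?thesis using q by auto
      qed
      moreover have "b \<notin> q" using q b le_refl by auto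
      ultimately show False using pq qp by blast
    qed
  qed
qed

end

locale hlal = heyt +
  assumes L: "is_hla A"
begin

lemma Lf: "(\<forall>a\<in>car. \<forall>b\<in>car. \<forall>c\<in>car.
        m (lw a b) (lw a c) = lw a (m b c) \<and>
        m (lw a c) (lw b c) = lw (j a b) c \<and>
        le (m (lw a b) (lw b c)) (lw a c)) \<and>
     (\<forall>a\<in>car. lw a a = tp)"
  using L unfolding is_hla_def by (elim conjE) (intro conjI)

lemma lw_meet2: "a \<in> car \<Longrightarrow> b \<in> car \<Longrightarrow> c \<in> car \<Longrightarrow> m (lw a b) (lw a c) = lw a (m b c)"
  using Lf by blast
lemma lw_join1: "a \<in> car \<Longrightarrow> b \<in> car \<Longrightarrow> c \<in> car \<Longrightarrow> m (lw a c) (lw b c) = lw (j a b) c"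
  using Lf by blast
lemma lw_trans: "a \<in> car \<Longrightarrow> b \<in> car \<Longrightarrow> c \<in> car \<Longrightarrow> le (m (lw a b) (lw b c)) (lw a c)"
  using Lf by blast
lemma lw_refl: "a \<in> car \<Longrightarrow> lw a a = tp"
  using Lf by blast

lemma lw_mono2: "a \<in> car \<Longrightarrow> b \<in> car \<Longrightarrow> c \<in> car \<Longrightarrow> le b c \<Longrightarrow> le (lw a b) (lw a c)"
  unfolding hle_def by (simp add: lw_meet2)

lemma lw_anti1: "a \<in> car \<Longrightarrow> b \<in> car \<Longrightarrow> c \<in> car \<Longrightarrow> le a b \<Longrightarrow> le (lw b c) (lw a c)"
proof -
  assume a: "a \<in> car" "b \<in> car" "c \<in> car" "le a b"
  have "j a b = b" using a le_j by simp
  hence "m (lw a c) (lw b c) = lw b c" using lw_join1[of a b c] a by simp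
  thus ?thesis unfolding hle_def using m_comm a by simp
qed

lemma lw_bt: "c \<in> car \<Longrightarrow> lw bt c = tp"
proof -
  assume c: "c \<in> car"
  have "j bt c = c" using j_comm[of bt c] j_bt c by simp
  hence "m (lw bt c) (lw c c) = lw c c" using lw_join1[of bt c c] c by simp
  hence "m (lw bt c) tp = tp" using lw_refl c by simp
  thus ?thesis using m_tp c by simp
qed

lemma lwR:
  assumes p: "p \<in> pf A"
  shows "\<And>x. x \<in> car \<Longrightarrow> lw x x \<in> p"
    "\<And>x y z. x \<in> car \<Longrightarrow> y \<in> car \<Longrightarrow> z \<in> car \<Longrightarrow> lw x y \<in> p \<Longrightarrow> lw y z \<in> p \<Longrightarrow> lw x z \<in> p"
    "\<And>x x' y. x \<in> car \<Longrightarrow> x' \<in> car \<Longrightarrow> y \<in> car \<Longrightarrow> le x' x \<Longrightarrow> lw x y \<in> p \<Longrightarrow> lw x' y \<in> p"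
    "\<And>x y y'. x \<in> car \<Longrightarrow> y \<in> car \<Longrightarrow> y' \<in> car \<Longrightarrow> le y y' \<Longrightarrow> lw x y \<in> p \<Longrightarrow> lw x y' \<in> p"
    "\<And>x1 x2 y. x1 \<in> car \<Longrightarrow> x2 \<in> car \<Longrightarrow> y \<in> car \<Longrightarrow> lw x1 y \<in> p \<Longrightarrow> lw x2 y \<in> p \<Longrightarrow> lw (j x1 x2) y \<in> p"
    "\<And>x y1 y2. x \<in> car \<Longrightarrow> y1 \<in> car \<Longrightarrow> y2 \<in> car \<Longrightarrow> lw x y1 \<in> p \<Longrightarrow> lw x y2 \<in> p \<Longrightarrow> lw x (m y1 y2) \<in> p"
proof -
  show "\<And>x. x \<in> car \<Longrightarrow> lw x x \<in> p" using lw_refl pf_props(2)[OF p] by simp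
  show "\<And>x y z. x \<in> car \<Longrightarrow> y \<in> car \<Longrightarrow> z \<in> car \<Longrightarrow> lw x y \<in> p \<Longrightarrow> lw y z \<in> p \<Longrightarrow> lw x z \<in> p"
  proof -
    fix x y z assume a: "x \<in> car" "y \<in> car" "z \<in> car" "lw x y \<in> p" "lw y z \<in> p"
    have "m (lw x y) (lw y z) \<in> p" using pf_props(5)[OF p] a by simp
    thus "lw x z \<in> p" using pf_props(4)[OF p] lw_trans[of x y z] a by simp
  qed
  show "\<And>x x' y. x \<in> car \<Longrightarrow> x' \<in> car \<Longrightarrow> y \<in> car \<Longrightarrow> le x' x \<Longrightarrow> lw x y \<in> p \<Longrightarrow> lw x' y \<in> p"
    using pf_props(4)[OF p] lw_anti1 by simp
  show "\<And>x y y'. x \<in> car \<Longrightarrow> y \<in> car \<Longrightarrow> y' \<in> car \<Longrightarrow> le y y' \<Longrightarrow> lw x y \<in> p \<Longrightarrow> lw x y' \<in> p"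
    using pf_props(4)[OF p] lw_mono2 by simp
  show "\<And>x1 x2 y. x1 \<in> car \<Longrightarrow> x2 \<in> car \<Longrightarrow> y \<in> car \<Longrightarrow> lw x1 y \<in> p \<Longrightarrow> lw x2 y \<in> p \<Longrightarrow> lw (j x1 x2) y \<in> p"
    using pf_props(5)[OF p] lw_join1 by metis
  show "\<And>x y1 y2. x \<in> car \<Longrightarrow> y1 \<in> car \<Longrightarrow> y2 \<in> car \<Longrightarrow> lw x y1 \<in> p \<Longrightarrow> lw x y2 \<in> p \<Longrightarrow> lw x (m y1 y2) \<in> p"
    using pf_props(5)[OF p] lw_meet2 by metis
qed

lemma tld_lw:
  assumes a: "a \<in> car" and b: "b \<in> car"
  shows "tld A (lw a b) = flew (dual_frame A) (tld A a) (tld A b)"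
proof
  show "tld A (lw a b) \<subseteq> flew (dual_frame A) (tld A a) (tld A b)"
  proof
    fix p assume "p \<in> tld A (lw a b)"
    hence p: "p \<in> pf A" "lw a b \<in> p" unfolding tld_def by auto
    have "b \<in> q" if "pf_sq A p q" "a \<in> q" for q
    proof -
      have "\<forall>x\<in>car. \<forall>y\<in>car. lw x y \<in> p \<and> x \<in> q \<longrightarrow> y \<in> q"
        using that(1) unfolding pf_sq_def by (elim conjE)
      thus ?thesis using a b p(2) that(2) by blast
    qed
    thus "p \<in> flew (dual_frame A) (tld A a) (tld A b)"
      unfolding flew_def tld_def using p by simp
  qed
next
  show "flew (dual_frame A) (tld A a) (tld A b) \<subseteq> tld A (lw a b)"
  proof
    fix p assume pin: "p \<in> flew (dual_frame A) (tld A a) (tld A b)"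
    hence pin': "p \<in> pf A \<and> (\<forall>y\<in>pf A. pf_sq A p y \<and> y \<in> tld A a \<longrightarrow> y \<in> tld A b)"
      unfolding flew_def by simp
    hence p: "p \<in> pf A" by simp
    have pq: "b \<in> q" if sq: "pf_sq A p q" and aq: "a \<in> q" for q
    proof -
      have qp: "q \<in> pf A" using sq[unfolded pf_sq_def] by (elim conjE)
      hence "q \<in> tld A a" using aq unfolding tld_def by simp
      hence "q \<in> tld A b" using pin' qp sq by simp
      thus ?thesis unfolding tld_def by simp
    qed
    have pc: "p \<subseteq> car" using pf_props(1)[OF p] .
    show "p \<in> tld A (lw a b)"
    proof (rule ccontr)
      assume nin: "p \<notin> tld A (lw a b)"
      hence nlw: "lw a b \<notin> p" using p unfolding tld_def by auto
      let ?F = "{y\<in>car. le a y}"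
      let ?I = "{y\<in>car. lw y b \<in> p}"
      have "\<exists>q. prime_filter A q \<and> ?F \<subseteq> q \<and> q \<inter> ?I = {} \<and>
             (\<forall>x\<in>car. \<forall>y\<in>car. lw x y \<in> p \<and> x \<in> q \<longrightarrow> y \<in> q)"
      proof (rule prime_ext[OF lwR[OF p]])
        show "tp \<in> ?F" using a le_tp by simp
        show "\<And>x y. x \<in> ?F \<Longrightarrow> y \<in> car \<Longrightarrow> le x y \<Longrightarrow> y \<in> ?F"
          using a le_trans by blast
        show "\<And>x y. x \<in> ?F \<Longrightarrow> y \<in> ?F \<Longrightarrow> m x y \<in> ?F"
          using a m_glb by simp
        show "bt \<in> ?I" using b lw_bt pf_props(2)[OF p] by simp
        show "\<And>x y. x \<in> ?I \<Longrightarrow> y \<in> ?I \<Longrightarrow> j x y \<in> ?I" using b lwR(5)[OF p] by simp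
        show "\<And>x y. x \<in> car \<Longrightarrow> y \<in> ?I \<Longrightarrow> lw x y \<in> p \<Longrightarrow> x \<in> ?I"
        proof -
          fix x y assume "x \<in> car" "y \<in> ?I" "lw x y \<in> p"
          thus "x \<in> ?I" using b lwR(2)[OF p, of x y b] by simp
        qed
        show "?F \<inter> ?I = {}"
        proof (rule ccontr)
          assume "?F \<inter> ?I \<noteq> {}"
          then obtain y where "y \<in> car" "le a y" "lw y b \<in> p" by auto
          thus False using lwR(3)[OF p, of y a b] a b nlw by simp
        qed
      qed auto
      then obtain q where q: "prime_filter A q" "?F \<subseteq> q" "q \<inter> ?I = {}"
        "\<forall>x\<in>car. \<forall>y\<in>car. lw x y \<in> p \<and> x \<in> q \<longrightarrow> y \<in> q" by blast
      have qp: "q \<in> pf A" using q unfolding pf_def by simp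
      have "a \<in> ?F" using a le_refl by simp
      hence "a \<in> q" by (rule subsetD[OF q(2)])
      moreover have "b \<in> ?I" using b lwR(1)[OF p] by simp
      hence "b \<notin> q" using q(3) by blast
      moreover have "pf_sq A p q" unfolding pf_sq_def using p qp q(4) by (intro conjI)
      ultimately show False using pq by simp
    qed
  qed
qed

end



inductive_set genF :: "'a hla \<Rightarrow> 'a set \<Rightarrow> 'a set" for A G where
  gF_base: "a \<in> G \<Longrightarrow> a \<in> hcar A \<Longrightarrow> a \<in> genF A G"
| gF_tp: "htop A \<in> genF A G"
| gF_m: "x \<in> genF A G \<Longrightarrow> y \<in> genF A G \<Longrightarrow> hmeet A x y \<in> genF A G"
| gF_up: "x \<in> genF A G \<Longrightarrow> y \<in> hcar A \<Longrightarrow> hle A x y \<Longrightarrow> y \<in> genF A G"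

inductive_set genI :: "'a hla \<Rightarrow> 'a set \<Rightarrow> 'a set" for A G where
  gI_base: "a \<in> G \<Longrightarrow> a \<in> hcar A \<Longrightarrow> a \<in> genI A G"
| gI_bt: "hbot A \<in> genI A G"
| gI_j: "x \<in> genI A G \<Longrightarrow> y \<in> genI A G \<Longrightarrow> hjoin A x y \<in> genI A G"
| gI_down: "x \<in> genI A G \<Longrightarrow> y \<in> hcar A \<Longrightarrow> hle A y x \<Longrightarrow> y \<in> genI A G"

context heyt
begin

lemma genF_car: "x \<in> genF A G \<Longrightarrow> x \<in> car"
  by (induction rule: genF.induct) auto

lemma genI_car: "x \<in> genI A G \<Longrightarrow> x \<in> car"
  by (induction rule: genI.induct) auto

lemma genF_fin: "x \<in> genF A G \<Longrightarrow> \<exists>H. finite H \<and> H \<subseteq> G \<and> (\<forall>p\<in>pf A. H \<subseteq> p \<longrightarrow> x \<in> p)"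
proof (induction rule: genF.induct)
  case (gF_base a)
  thus ?case by (intro exI[of _ "{a}"]) simp
next
  case gF_tp
  show ?case using pf_props(2) by (intro exI[of _ "{}"]) simp
next
  case (gF_m x y)
  then obtain H1 H2 where H: "finite H1" "H1 \<subseteq> G" "\<forall>p\<in>pf A. H1 \<subseteq> p \<longrightarrow> x \<in> p"
    "finite H2" "H2 \<subseteq> G" "\<forall>p\<in>pf A. H2 \<subseteq> p \<longrightarrow> y \<in> p" by blast
  have "\<forall>p\<in>pf A. H1 \<union> H2 \<subseteq> p \<longrightarrow> m x y \<in> p"
  proof (intro ballI impI)
    fix p assume "p \<in> pf A" "H1 \<union> H2 \<subseteq> p"
    thus "m x y \<in> p" using H pf_props(5)[of p x y] by simp
  qed
  thus ?case using H by (intro exI[of _ "H1 \<union> H2"]) simp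
next
  case (gF_up x y)
  then obtain H where H: "finite H" "H \<subseteq> G" "\<forall>p\<in>pf A. H \<subseteq> p \<longrightarrow> x \<in> p" by blast
  have "\<forall>p\<in>pf A. H \<subseteq> p \<longrightarrow> y \<in> p"
  proof (intro ballI impI)
    fix p assume "p \<in> pf A" "H \<subseteq> p"
    thus "y \<in> p" using H pf_props(4)[of p x y] gF_up.hyps by simp
  qed
  thus ?case using H by blast
qed

lemma genI_fin: "x \<in> genI A G \<Longrightarrow> \<exists>H. finite H \<and> H \<subseteq> G \<and> (\<forall>p\<in>pf A. x \<in> p \<longrightarrow> (\<exists>b\<in>H. b \<in> p))"
proof (induction rule: genI.induct)
  case (gI_base a)
  thus ?case by (intro exI[of _ "{a}"]) simp
next
  case gI_bt
  show ?case using pf_props(3) by (intro exI[of _ "{}"]) simp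
next
  case (gI_j x y)
  then obtain H1 H2 where H: "finite H1" "H1 \<subseteq> G" "\<forall>p\<in>pf A. x \<in> p \<longrightarrow> (\<exists>b\<in>H1. b \<in> p)"
    "finite H2" "H2 \<subseteq> G" "\<forall>p\<in>pf A. y \<in> p \<longrightarrow> (\<exists>b\<in>H2. b \<in> p)" by blast
  have xy: "x \<in> car" "y \<in> car" using gI_j.hyps genI_car by auto
  have "\<forall>p\<in>pf A. j x y \<in> p \<longrightarrow> (\<exists>b\<in>H1 \<union> H2. b \<in> p)"
  proof (intro ballI impI)
    fix p assume p: "p \<in> pf A" "j x y \<in> p"
    hence "x \<in> p \<or> y \<in> p" using pf_props(6)[OF p(1)] xy by simp
    thus "\<exists>b\<in>H1 \<union> H2. b \<in> p" using H p(1) by blast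
  qed
  thus ?case using H by (intro exI[of _ "H1 \<union> H2"]) simp
next
  case (gI_down x y)
  then obtain H where H: "finite H" "H \<subseteq> G" "\<forall>p\<in>pf A. x \<in> p \<longrightarrow> (\<exists>b\<in>H. b \<in> p)" by blast
  have xc: "x \<in> car" using gI_down.hyps genI_car by auto
  have "\<forall>p\<in>pf A. y \<in> p \<longrightarrow> (\<exists>b\<in>H. b \<in> p)"
  proof (intro ballI impI)
    fix p assume p: "p \<in> pf A" "y \<in> p"
    hence "x \<in> p" using pf_props(4)[OF p(1), of y x] gI_down.hyps xc by simp
    thus "\<exists>b\<in>H. b \<in> p" using H p(1) by blast
  qed
  thus ?case using H by blast
qed

end

context hlal
begin

lemma dual_compact: "compact_frame (dual_frame A)"
  unfolding compact_frame_def
proof (intro allI impI, elim conjE)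
  fix S assume Ssub: "S \<subseteq> adm (dual_frame A) \<union> {pts (dual_frame A) - a |a. a \<in> adm (dual_frame A)}"
    and fS: "fip (dual_frame A) S"
  define Ga where "Ga = {a\<in>car. tld A a \<in> S}"
  define Gb where "Gb = {b\<in>car. pf A - tld A b \<in> S}"
  have disj: "genF A Ga \<inter> genI A Gb = {}"
  proof (rule ccontr)
    assume "genF A Ga \<inter> genI A Gb \<noteq> {}"
    then obtain x where x: "x \<in> genF A Ga" "x \<in> genI A Gb" by blast
    obtain H1 where H1: "finite H1" "H1 \<subseteq> Ga" "\<forall>p\<in>pf A. H1 \<subseteq> p \<longrightarrow> x \<in> p"
      using genF_fin[OF x(1)] by blast
    obtain H2 where H2: "finite H2" "H2 \<subseteq> Gb" "\<forall>p\<in>pf A. x \<in> p \<longrightarrow> (\<exists>b\<in>H2. b \<in> p)"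
      using genI_fin[OF x(2)] by blast
    define Fam where "Fam = tld A ` H1 \<union> (\<lambda>b. pf A - tld A b) ` H2"
    have "Fam \<subseteq> S" unfolding Fam_def using H1(2) H2(2) unfolding Ga_def Gb_def by auto
    moreover have "finite Fam" unfolding Fam_def using H1(1) H2(1) by simp
    ultimately have "pts (dual_frame A) \<inter> \<Inter>Fam \<noteq> {}" using fS unfolding fip_def by blast
    then obtain p where p: "p \<in> pf A" "p \<in> \<Inter>Fam" by auto
    have "H1 \<subseteq> p"
    proof
      fix a assume "a \<in> H1"
      hence "p \<in> tld A a" using p(2) unfolding Fam_def by auto
      thus "a \<in> p" unfolding tld_def by simp
    qed
    hence "x \<in> p" using H1(3) p(1) by blast
    then obtain b where b: "b \<in> H2" "b \<in> p" using H2(3) p(1) by blast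
    have "p \<in> pf A - tld A b" using p(2) b(1) unfolding Fam_def by auto
    thus False using b(2) unfolding tld_def by simp
  qed
  have "\<exists>q. prime_filter A q \<and> genF A Ga \<subseteq> q \<and> q \<inter> genI A Gb = {}"
  proof (rule prime_ext_le)
    show "genF A Ga \<subseteq> car" using genF_car by (rule subsetI)
    show "tp \<in> genF A Ga" by (rule gF_tp)
    show "\<And>x y. x \<in> genF A Ga \<Longrightarrow> y \<in> car \<Longrightarrow> le x y \<Longrightarrow> y \<in> genF A Ga" by (rule gF_up)
    show "\<And>x y. x \<in> genF A Ga \<Longrightarrow> y \<in> genF A Ga \<Longrightarrow> m x y \<in> genF A Ga" by (rule gF_m)
    show "genI A Gb \<subseteq> car" using genI_car by (rule subsetI)
    show "bt \<in> genI A Gb" by (rule gI_bt)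
    show "\<And>x y. x \<in> genI A Gb \<Longrightarrow> y \<in> genI A Gb \<Longrightarrow> j x y \<in> genI A Gb" by (rule gI_j)
    show "\<And>x y. x \<in> car \<Longrightarrow> y \<in> genI A Gb \<Longrightarrow> le x y \<Longrightarrow> x \<in> genI A Gb"
      by (rule gI_down)
    show "genF A Ga \<inter> genI A Gb = {}" by (rule disj)
  qed
  then obtain q where q: "prime_filter A q" "genF A Ga \<subseteq> q" "q \<inter> genI A Gb = {}" by blast
  have qp: "q \<in> pf A" using q(1) unfolding pf_def by simp
  have "q \<in> \<Inter>S"
  proof
    fix s assume sS: "s \<in> S"
    hence "s \<in> tld A ` car \<or> (\<exists>a\<in>tld A ` car. s = pf A - a)" using Ssub by auto
    thus "q \<in> s"
    proof
      assume "s \<in> tld A ` car"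
      then obtain a where a: "a \<in> car" "s = tld A a" by blast
      hence "a \<in> Ga" unfolding Ga_def using sS by simp
      hence "a \<in> genF A Ga" using a(1) by (rule gF_base)
      hence "a \<in> q" using q(2) by blast
      thus "q \<in> s" using a qp unfolding tld_def by simp
    next
      assume "\<exists>a\<in>tld A ` car. s = pf A - a"
      then obtain b where b: "b \<in> car" "s = pf A - tld A b" by blast
      hence "b \<in> Gb" unfolding Gb_def using sS by simp
      hence "b \<in> genI A Gb" using b(1) by (rule gI_base)
      hence "b \<notin> q" using q(3) by blast
      thus "q \<in> s" using b qp unfolding tld_def by simp
    qed
  qed
  thus "pts (dual_frame A) \<inter> \<Inter>S \<noteq> {}" using qp by auto
qed

lemma dual_lew_frame: "lew_frame (dual_frame A)"
proof -
  have 1: "\<forall>x y. fle (dual_frame A) x y \<longrightarrow> x \<in> pts (dual_frame A) \<and> y \<in> pts (dual_frame A)" by simp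
  have 2: "\<forall>x y. fsq (dual_frame A) x y \<longrightarrow> x \<in> pts (dual_frame A) \<and> y \<in> pts (dual_frame A)"
    unfolding df_simps pf_sq_def by simp
  have 3: "\<forall>x\<in>pts (dual_frame A). fle (dual_frame A) x x" by simp
  have 4: "\<forall>x y. fle (dual_frame A) x y \<and> fle (dual_frame A) y x \<longrightarrow> x = y" by auto
  have 5: "\<forall>x y z. fle (dual_frame A) x y \<and> fle (dual_frame A) y z \<longrightarrow> fle (dual_frame A) x z" by auto
  have 6: "\<forall>x y z. fle (dual_frame A) x y \<and> fsq (dual_frame A) y z \<longrightarrow> fsq (dual_frame A) x z"
  proof (intro allI impI)
    fix x y z assume a: "fle (dual_frame A) x y \<and> fsq (dual_frame A) y z"
    hence xy: "x \<in> pf A" "x \<subseteq> y" and yz: "pf_sq A y z" by auto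
    have yz': "\<forall>a\<in>car. \<forall>b\<in>car. lw a b \<in> y \<and> a \<in> z \<longrightarrow> b \<in> z"
      using yz unfolding pf_sq_def by (elim conjE)
    have "\<forall>a\<in>car. \<forall>b\<in>car. lw a b \<in> x \<and> a \<in> z \<longrightarrow> b \<in> z"
    proof (intro ballI impI)
      fix a b assume "a \<in> car" "b \<in> car" "lw a b \<in> x \<and> a \<in> z"
      thus "b \<in> z" using yz' xy(2) by blast
    qed
    moreover have "z \<in> pf A" using yz unfolding pf_sq_def by (elim conjE)
    ultimately have "pf_sq A x z" unfolding pf_sq_def using xy(1) by (intro conjI)
    thus "fsq (dual_frame A) x z" by simp
  qed
  show ?thesis unfolding lew_frame_def using 1 2 3 4 5 6 by (intro conjI)
qed

lemma tld_upset: "a \<in> car \<Longrightarrow> is_upset (dual_frame A) (tld A a)"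
  unfolding is_upset_def tld_def by auto

lemma dual_general: "general_frame (dual_frame A)"
  unfolding general_frame_def
proof (intro conjI ballI)
  show "lew_frame (dual_frame A)" by (rule dual_lew_frame)
next
  fix a assume "a \<in> adm (dual_frame A)"
  then obtain x where "x \<in> car" "a = tld A x" by auto
  thus "is_upset (dual_frame A) a" using tld_upset by simp
next
  show "pts (dual_frame A) \<in> adm (dual_frame A)" using tld_tp tp_c by (simp add: image_iff) (metis tp_c)
  show "{} \<in> adm (dual_frame A)" using tld_bt bt_c by (simp add: image_iff) (metis bt_c)
next
  fix a b assume "a \<in> adm (dual_frame A)" "b \<in> adm (dual_frame A)"
  then obtain x y where xy: "x \<in> car" "a = tld A x" "y \<in> car" "b = tld A y" by auto
  show "a \<inter> b \<in> adm (dual_frame A)" using xy tld_meet[of x y] by (simp add: image_iff) (metis m_c)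
  show "a \<union> b \<in> adm (dual_frame A)" using xy tld_join[of x y] by (simp add: image_iff) (metis j_c)
  show "fimp (dual_frame A) a b \<in> adm (dual_frame A)" using xy tld_imp[of x y] by (simp add: image_iff) (metis im_c)
  show "flew (dual_frame A) a b \<in> adm (dual_frame A)" using xy tld_lw[of x y] by (simp add: image_iff) (metis lw_c)
qed

lemma dual_descriptive: "descriptive_frame (dual_frame A)"
  unfolding descriptive_frame_def
proof (intro conjI ballI impI)
  show "general_frame (dual_frame A)" by (rule dual_general)
  show "compact_frame (dual_frame A)" by (rule dual_compact)
next
  fix x y assume xy: "x \<in> pts (dual_frame A)" "y \<in> pts (dual_frame A)" "\<not> fle (dual_frame A) x y"
  hence "\<not> x \<subseteq> y" by simp
  then obtain a where a: "a \<in> x" "a \<notin> y" by blast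
  have ac: "a \<in> car" using a xy pf_props(1)[of x] by auto
  have "tld A a \<in> adm (dual_frame A)" using ac by simp
  moreover have "x \<in> tld A a" "y \<notin> tld A a" using a xy unfolding tld_def by auto
  ultimately show "\<exists>a\<in>adm (dual_frame A). x \<in> a \<and> y \<notin> a" by blast
next
  fix x y assume xy: "x \<in> pts (dual_frame A)" "y \<in> pts (dual_frame A)" "\<not> fsq (dual_frame A) x y"
  hence "\<not> pf_sq A x y" by simp
  hence "\<not> (\<forall>a\<in>car. \<forall>b\<in>car. lw a b \<in> x \<and> a \<in> y \<longrightarrow> b \<in> y)" using xy unfolding pf_sq_def by simp
  then obtain a b where ab: "a \<in> car" "b \<in> car" "lw a b \<in> x" "a \<in> y" "b \<notin> y" by blast
  have "x \<in> tld A (lw a b)" using ab(3) xy unfolding tld_def by simp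
  hence "x \<in> flew (dual_frame A) (tld A a) (tld A b)" using tld_lw[OF ab(1,2)] by simp
  moreover have "y \<in> tld A a" "y \<notin> tld A b" using ab xy unfolding tld_def by auto
  moreover have "tld A a \<in> adm (dual_frame A)" "tld A b \<in> adm (dual_frame A)" using ab by auto
  ultimately show "\<exists>a\<in>adm (dual_frame A). \<exists>b\<in>adm (dual_frame A). x \<in> flew (dual_frame A) a b \<and> y \<in> a \<and> y \<notin> b"
    by blast
qed

end



context heyt
begin

lemma m_mono: "a \<in> car \<Longrightarrow> b \<in> car \<Longrightarrow> c \<in> car \<Longrightarrow> d \<in> car \<Longrightarrow> le a c \<Longrightarrow> le b d \<Longrightarrow> le (m a b) (m c d)"
proof -
  assume as: "a \<in> car" "b \<in> car" "c \<in> car" "d \<in> car" "le a c" "le b d"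
  have "le (m a b) c" using le_trans[of "m a b" a c] m_lb1[of a b] as by simp
  moreover have "le (m a b) d" using le_trans[of "m a b" b d] m_lb2[of a b] as by simp
  ultimately show ?thesis using m_glb as by simp
qed

lemma j_mono: "a \<in> car \<Longrightarrow> b \<in> car \<Longrightarrow> c \<in> car \<Longrightarrow> d \<in> car \<Longrightarrow> le a c \<Longrightarrow> le b d \<Longrightarrow> le (j a b) (j c d)"
proof -
  assume as: "a \<in> car" "b \<in> car" "c \<in> car" "d \<in> car" "le a c" "le b d"
  have "le a (j c d)" using le_trans[of a c "j c d"] j_ub1[of c d] as by simp
  moreover have "le b (j c d)" using le_trans[of b d "j c d"] j_ub2[of c d] as by simp
  ultimately show ?thesis using j_lub as by simp
qed

lemma m_tp_l: "a \<in> car \<Longrightarrow> m tp a = a"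
  using m_comm[of tp a] m_tp by simp

end

locale hhom = A: hlal A + B: hlal B for A :: "'a hla" and B :: "'b hla" +
  fixes h :: "'a \<Rightarrow> 'b"
  assumes hom: "hla_hom A B h"
begin

lemma h_c[simp]: "a \<in> A.car \<Longrightarrow> h a \<in> B.car"
  using hom unfolding hla_hom_def by blast
lemma h_tp[simp]: "h A.tp = B.tp" and h_bt[simp]: "h A.bt = B.bt"
  using hom unfolding hla_hom_def by blast+
lemma h_m: "a \<in> A.car \<Longrightarrow> b \<in> A.car \<Longrightarrow> h (A.m a b) = B.m (h a) (h b)"
  and h_j: "a \<in> A.car \<Longrightarrow> b \<in> A.car \<Longrightarrow> h (A.j a b) = B.j (h a) (h b)"
  and h_im: "a \<in> A.car \<Longrightarrow> b \<in> A.car \<Longrightarrow> h (A.im a b) = B.im (h a) (h b)"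
  and h_lw: "a \<in> A.car \<Longrightarrow> b \<in> A.car \<Longrightarrow> h (A.lw a b) = B.lw (h a) (h b)"
  using hom unfolding hla_hom_def by blast+

lemma h_le: "a \<in> A.car \<Longrightarrow> b \<in> A.car \<Longrightarrow> A.le a b \<Longrightarrow> B.le (h a) (h b)"
  unfolding hle_def by (metis h_m)

abbreviation "dh \<equiv> dual_hom A h"

lemma dh_pf: assumes q: "q \<in> pf B" shows "dh q \<in> pf A"
  unfolding pf_def mem_Collect_eq prime_filter_def
proof (intro conjI ballI impI)
  show "dh q \<subseteq> A.car" unfolding dual_hom_def by auto
  show "A.tp \<in> dh q" unfolding dual_hom_def using B.pf_props(2)[OF q] by simp
  show "A.bt \<notin> dh q" unfolding dual_hom_def using B.pf_props(3)[OF q] by simp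
next
  fix a b assume a: "a \<in> dh q" and b: "b \<in> A.car" and ab: "A.le a b"
  have "a \<in> A.car" "h a \<in> q" using a unfolding dual_hom_def by auto
  hence "h b \<in> q" using B.pf_props(4)[OF q, of "h a" "h b"] h_le[of a b] b ab by simp
  thus "b \<in> dh q" unfolding dual_hom_def using b by simp
next
  fix a b assume a: "a \<in> dh q" and b: "b \<in> dh q"
  hence "a \<in> A.car" "h a \<in> q" "b \<in> A.car" "h b \<in> q" unfolding dual_hom_def by auto
  thus "A.m a b \<in> dh q" unfolding dual_hom_def using B.pf_props(5)[OF q] h_m by simp
next
  fix a b assume a: "a \<in> A.car" "b \<in> A.car" "A.j a b \<in> dh q"
  hence "B.j (h a) (h b) \<in> q" unfolding dual_hom_def using h_j by simp
  hence "h a \<in> q \<or> h b \<in> q" using B.pf_props(6)[OF q] a by simp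
  thus "a \<in> dh q \<or> b \<in> dh q" unfolding dual_hom_def using a by auto
qed

lemma dh_fle_back:
  assumes x: "x \<in> pf B" and z': "z' \<in> pf A" and sub: "dh x \<subseteq> z'"
  shows "\<exists>z. z \<in> pf B \<and> x \<subseteq> z \<and> dh z = z'"
proof -
  have xc: "x \<subseteq> B.car" using B.pf_props(1)[OF x] .
  have zc: "z' \<subseteq> A.car" using A.pf_props(1)[OF z'] .
  let ?F = "{y\<in>B.car. \<exists>x0\<in>x. \<exists>a\<in>z'. B.le (B.m x0 (h a)) y}"
  let ?I = "{y\<in>B.car. \<exists>c\<in>A.car - z'. B.le y (h c)}"
  have "\<exists>q. prime_filter B q \<and> ?F \<subseteq> q \<and> q \<inter> ?I = {}"
  proof (rule B.prime_ext_le)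
    show "?F \<subseteq> B.car" by auto
    have "B.le (B.m B.tp (h A.tp)) B.tp" using B.le_tp by simp
    thus "B.tp \<in> ?F" using B.pf_props(2)[OF x] A.pf_props(2)[OF z'] B.tp_c by blast
  next
    fix u v assume u: "u \<in> ?F" and v: "v \<in> B.car" and uv: "B.le u v"
    then obtain x0 a where xa: "x0 \<in> x" "a \<in> z'" "B.le (B.m x0 (h a)) u" "u \<in> B.car" by auto
    have "x0 \<in> B.car" "a \<in> A.car" using xa xc zc by auto
    hence "B.le (B.m x0 (h a)) v" using B.le_trans[of "B.m x0 (h a)" u v] xa v uv by simp
    thus "v \<in> ?F" using xa v by blast
  next
    fix u v assume u: "u \<in> ?F" and v: "v \<in> ?F"
    then obtain x1 a1 x2 a2 where xa: "x1 \<in> x" "a1 \<in> z'" "B.le (B.m x1 (h a1)) u" "u \<in> B.car"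
      "x2 \<in> x" "a2 \<in> z'" "B.le (B.m x2 (h a2)) v" "v \<in> B.car" by blast
    have cc: "x1 \<in> B.car" "x2 \<in> B.car" "a1 \<in> A.car" "a2 \<in> A.car" using xa xc zc by auto
    have "B.le (B.m (B.m x1 x2) (h (A.m a1 a2))) (B.m u v)"
    proof -
      have e: "h (A.m a1 a2) = B.m (h a1) (h a2)" using h_m cc by simp
      have "B.le (B.m (B.m x1 x2) (B.m (h a1) (h a2))) (B.m x1 (h a1))"
        using B.m_mono[of "B.m x1 x2" "B.m (h a1) (h a2)" x1 "h a1"] B.m_lb1 cc by simp
      hence 1: "B.le (B.m (B.m x1 x2) (B.m (h a1) (h a2))) u"
        using B.le_trans[OF _ _ _ _ xa(3)] cc xa by simp
      have "B.le (B.m (B.m x1 x2) (B.m (h a1) (h a2))) (B.m x2 (h a2))"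
        using B.m_mono[of "B.m x1 x2" "B.m (h a1) (h a2)" x2 "h a2"] B.m_lb2 cc by simp
      hence 2: "B.le (B.m (B.m x1 x2) (B.m (h a1) (h a2))) v"
        using B.le_trans[OF _ _ _ _ xa(7)] cc xa by simp
      show ?thesis using e 1 2 B.m_glb cc xa by simp
    qed
    moreover have "B.m x1 x2 \<in> x" using B.pf_props(5)[OF x] xa by simp
    moreover have "A.m a1 a2 \<in> z'" using A.pf_props(5)[OF z'] xa by simp
    ultimately show "B.m u v \<in> ?F" using xa B.m_c[of u v] by blast
  next
    show "?I \<subseteq> B.car" by auto
    have "B.le B.bt (h A.bt)" using B.le_refl by simp
    thus "B.bt \<in> ?I" using A.pf_props(3)[OF z'] B.bt_c A.bt_c by blast
  next
    fix u v assume u: "u \<in> ?I" and v: "v \<in> ?I"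
    then obtain c1 c2 where cc: "c1 \<in> A.car" "c1 \<notin> z'" "B.le u (h c1)" "u \<in> B.car"
      "c2 \<in> A.car" "c2 \<notin> z'" "B.le v (h c2)" "v \<in> B.car" by blast
    have "B.le (B.j u v) (h (A.j c1 c2))" using B.j_mono cc h_j by simp
    moreover have "A.j c1 c2 \<notin> z'" using A.pf_props(6)[OF z', of c1 c2] cc by blast
    ultimately show "B.j u v \<in> ?I" using cc by (intro CollectI conjI B.j_c) (auto intro!: bexI[of _ "A.j c1 c2"])
  next
    fix u v assume u: "u \<in> B.car" and v: "v \<in> ?I" and uv: "B.le u v"
    then obtain c where c: "c \<in> A.car" "c \<notin> z'" "B.le v (h c)" "v \<in> B.car" by blast
    hence "B.le u (h c)" using B.le_trans[of u v "h c"] u uv by simp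
    thus "u \<in> ?I" using u c by blast
  next
    show "?F \<inter> ?I = {}"
    proof (rule ccontr)
      assume "?F \<inter> ?I \<noteq> {}"
      then obtain y x0 a c where yy: "y \<in> B.car" "x0 \<in> x" "a \<in> z'" "B.le (B.m x0 (h a)) y"
        "c \<in> A.car" "c \<notin> z'" "B.le y (h c)" by blast
      have cc: "x0 \<in> B.car" "a \<in> A.car" using yy xc zc by auto
      have "B.le (B.m x0 (h a)) (h c)" using B.le_trans[of _ y "h c"] yy cc by simp
      hence "B.le x0 (B.im (h a) (h c))" using B.resid cc yy by simp
      hence "B.le x0 (h (A.im a c))" using h_im cc yy by simp
      hence "h (A.im a c) \<in> x" using B.pf_props(4)[OF x, of x0 "h (A.im a c)"] yy cc by simp
      hence "A.im a c \<in> z'" using sub cc yy unfolding dual_hom_def by auto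
      hence "A.m a (A.im a c) \<in> z'" using A.pf_props(5)[OF z'] yy by simp
      hence "c \<in> z'" using A.pf_props(4)[OF z', of "A.m a (A.im a c)" c] A.mp cc yy by simp
      thus False using yy by simp
    qed
  qed
  then obtain q where q: "prime_filter B q" "?F \<subseteq> q" "q \<inter> ?I = {}" by blast
  have qp: "q \<in> pf B" using q unfolding pf_def by simp
  have "x \<subseteq> q"
  proof
    fix x0 assume x0: "x0 \<in> x"
    hence "x0 \<in> B.car" using xc by auto
    hence "B.le (B.m x0 (h A.tp)) x0" using B.m_tp B.le_refl by simp
    hence "x0 \<in> ?F" using x0 A.pf_props(2)[OF z'] xc by blast
    thus "x0 \<in> q" using q(2) by blast
  qed
  moreover have "dh q = z'"
  proof
    show "dh q \<subseteq> z'"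
    proof
      fix a assume "a \<in> dh q"
      hence a: "a \<in> A.car" "h a \<in> q" unfolding dual_hom_def by auto
      show "a \<in> z'"
      proof (rule ccontr)
        assume "a \<notin> z'"
        moreover have "B.le (h a) (h a)" "h a \<in> B.car" using B.le_refl a by simp_all
        ultimately have "h a \<in> ?I" using a by blast
        thus False using q(3) a by blast
      qed
    qed
  next
    show "z' \<subseteq> dh q"
    proof
      fix a assume a: "a \<in> z'"
      hence ac: "a \<in> A.car" using zc by auto
      hence "B.le (B.m B.tp (h a)) (h a)" using B.m_tp_l B.le_refl by simp
      hence "h a \<in> ?F" using a ac B.pf_props(2)[OF x] h_c[OF ac] by blast
      hence "h a \<in> q" using q(2) by blast
      thus "a \<in> dh q" unfolding dual_hom_def using ac by simp
    qed
  qed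
  ultimately show ?thesis using qp by blast
qed

lemma dh_sq_fwd:
  assumes sq: "pf_sq B x y"
  shows "pf_sq A (dh x) (dh y)"
proof -
  have x: "x \<in> pf B" using sq unfolding pf_sq_def by (elim conjE)
  have y: "y \<in> pf B" using sq unfolding pf_sq_def by (elim conjE)
  have R: "\<forall>a\<in>B.car. \<forall>b\<in>B.car. B.lw a b \<in> x \<and> a \<in> y \<longrightarrow> b \<in> y"
    using sq unfolding pf_sq_def by (elim conjE)
  have "\<forall>a\<in>A.car. \<forall>b\<in>A.car. A.lw a b \<in> dh x \<and> a \<in> dh y \<longrightarrow> b \<in> dh y"
  proof (intro ballI impI)
    fix a b assume ab: "a \<in> A.car" "b \<in> A.car" "A.lw a b \<in> dh x \<and> a \<in> dh y"
    hence "B.lw (h a) (h b) \<in> x" "h a \<in> y" unfolding dual_hom_def using h_lw by auto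
    hence "h b \<in> y" using R ab h_c by blast
    thus "b \<in> dh y" unfolding dual_hom_def using ab by simp
  qed
  thus ?thesis unfolding pf_sq_def using dh_pf x y by (intro conjI)
qed

lemma dh_sq_back:
  assumes x: "x \<in> pf B" and z': "z' \<in> pf A" and sq: "pf_sq A (dh x) z'"
  shows "\<exists>z. pf_sq B x z \<and> dh z = z'"
proof -
  have xc: "x \<subseteq> B.car" using B.pf_props(1)[OF x] .
  have zc: "z' \<subseteq> A.car" using A.pf_props(1)[OF z'] .
  have SQ: "\<forall>a\<in>A.car. \<forall>b\<in>A.car. A.lw a b \<in> dh x \<and> a \<in> z' \<longrightarrow> b \<in> z'"
    using sq unfolding pf_sq_def by (elim conjE)
  let ?F = "{y\<in>B.car. \<exists>a\<in>z'. B.le (h a) y}"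
  let ?I = "{y\<in>B.car. \<exists>c\<in>A.car - z'. B.lw y (h c) \<in> x}"
  have "\<exists>q. prime_filter B q \<and> ?F \<subseteq> q \<and> q \<inter> ?I = {} \<and>
             (\<forall>u\<in>B.car. \<forall>v\<in>B.car. B.lw u v \<in> x \<and> u \<in> q \<longrightarrow> v \<in> q)"
  proof (rule B.prime_ext[OF B.lwR[OF x]])
    show "?F \<subseteq> B.car" by auto
    have "B.le (h A.tp) B.tp" using B.le_refl by simp
    thus "B.tp \<in> ?F" using A.pf_props(2)[OF z'] B.tp_c by blast
  next
    fix u v assume u: "u \<in> ?F" and v: "v \<in> B.car" and uv: "B.le u v"
    then obtain a where xa: "a \<in> z'" "B.le (h a) u" "u \<in> B.car" by auto
    have "a \<in> A.car" using xa zc by auto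
    hence "B.le (h a) v" using B.le_trans[of "h a" u v] xa v uv by simp
    thus "v \<in> ?F" using xa v by blast
  next
    fix u v assume u: "u \<in> ?F" and v: "v \<in> ?F"
    then obtain a1 a2 where xa: "a1 \<in> z'" "B.le (h a1) u" "u \<in> B.car"
      "a2 \<in> z'" "B.le (h a2) v" "v \<in> B.car" by blast
    have cc: "a1 \<in> A.car" "a2 \<in> A.car" using xa zc by auto
    have "B.le (h (A.m a1 a2)) (B.m u v)" using B.m_mono xa cc h_m by simp
    moreover have "A.m a1 a2 \<in> z'" using A.pf_props(5)[OF z'] xa by simp
    ultimately show "B.m u v \<in> ?F" using xa B.m_c[of u v] by blast
  next
    show "?I \<subseteq> B.car" by auto
    have "B.lw B.bt (h A.bt) \<in> x" using B.lw_bt B.pf_props(2)[OF x] by simp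
    thus "B.bt \<in> ?I" using A.pf_props(3)[OF z'] B.bt_c A.bt_c by blast
  next
    fix u v assume u: "u \<in> ?I" and v: "v \<in> ?I"
    then obtain c1 c2 where cc: "c1 \<in> A.car" "c1 \<notin> z'" "B.lw u (h c1) \<in> x" "u \<in> B.car"
      "c2 \<in> A.car" "c2 \<notin> z'" "B.lw v (h c2) \<in> x" "v \<in> B.car" by blast
    have e: "h (A.j c1 c2) = B.j (h c1) (h c2)" using h_j cc by simp
    have "B.lw u (h (A.j c1 c2)) \<in> x"
      using B.lwR(4)[OF x, of u "h c1" "h (A.j c1 c2)"] e B.j_ub1 cc by simp
    moreover have "B.lw v (h (A.j c1 c2)) \<in> x"
      using B.lwR(4)[OF x, of v "h c2" "h (A.j c1 c2)"] e B.j_ub2 cc by simp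
    ultimately have "B.lw (B.j u v) (h (A.j c1 c2)) \<in> x" using B.lwR(5)[OF x] cc by simp
    moreover have "A.j c1 c2 \<notin> z'" using A.pf_props(6)[OF z', of c1 c2] cc by blast
    moreover have "A.j c1 c2 \<in> A.car" "B.j u v \<in> B.car" using cc by simp_all
    ultimately show "B.j u v \<in> ?I" by blast
  next
    fix u v assume u: "u \<in> B.car" and v: "v \<in> ?I" and uv: "B.lw u v \<in> x"
    then obtain c where c: "c \<in> A.car" "c \<notin> z'" "B.lw v (h c) \<in> x" "v \<in> B.car" by blast
    hence "B.lw u (h c) \<in> x" using B.lwR(2)[OF x, of u v "h c"] u uv by simp
    thus "u \<in> ?I" using u c by blast
  next
    show "?F \<inter> ?I = {}"
    proof (rule ccontr)
      assume "?F \<inter> ?I \<noteq> {}"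
      then obtain y a c where yy: "y \<in> B.car" "a \<in> z'" "B.le (h a) y"
        "c \<in> A.car" "c \<notin> z'" "B.lw y (h c) \<in> x" by blast
      have cc: "a \<in> A.car" using yy zc by auto
      have "B.lw (h a) (h c) \<in> x" using B.lwR(3)[OF x, of y "h a" "h c"] yy cc by simp
      hence "h (A.lw a c) \<in> x" using h_lw cc yy by simp
      hence "A.lw a c \<in> dh x" unfolding dual_hom_def using cc yy by simp
      hence "c \<in> z'" using SQ cc yy by blast
      thus False using yy by simp
    qed
  qed
  then obtain q where q: "prime_filter B q" "?F \<subseteq> q" "q \<inter> ?I = {}"
    "\<forall>u\<in>B.car. \<forall>v\<in>B.car. B.lw u v \<in> x \<and> u \<in> q \<longrightarrow> v \<in> q" by blast
  have qp: "q \<in> pf B" using q unfolding pf_def by simp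
  have "pf_sq B x q" unfolding pf_sq_def using x qp q(4) by (intro conjI)
  moreover have "dh q = z'"
  proof
    show "dh q \<subseteq> z'"
    proof
      fix a assume "a \<in> dh q"
      hence a: "a \<in> A.car" "h a \<in> q" unfolding dual_hom_def by auto
      show "a \<in> z'"
      proof (rule ccontr)
        assume "a \<notin> z'"
        moreover have "B.lw (h a) (h a) \<in> x" "h a \<in> B.car" using B.lwR(1)[OF x] a by simp_all
        ultimately have "h a \<in> ?I" using a by blast
        thus False using q(3) a by blast
      qed
    qed
  next
    show "z' \<subseteq> dh q"
    proof
      fix a assume a: "a \<in> z'"
      hence ac: "a \<in> A.car" using zc by auto
      hence "B.le (h a) (h a)" using B.le_refl by simp
      hence "h a \<in> ?F" using a ac h_c[OF ac] by blast
      hence "h a \<in> q" using q(2) by blast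
      thus "a \<in> dh q" unfolding dual_hom_def using ac by simp
    qed
  qed
  ultimately show ?thesis by blast
qed

lemma dh_mor: "dframe_mor (dual_frame B) (dual_frame A) dh"
  unfolding dframe_mor_def bounded_for_def
proof (intro conjI allI impI ballI)
  fix x assume "x \<in> pts (dual_frame B)"
  thus "dh x \<in> pts (dual_frame A)" using dh_pf by simp
next
  fix x y assume "fle (dual_frame B) x y"
  hence xy: "x \<in> pf B" "y \<in> pf B" "x \<subseteq> y" by auto
  have "dh x \<subseteq> dh y" using xy(3) unfolding dual_hom_def by auto
  thus "fle (dual_frame A) (dh x) (dh y)" using dh_pf xy by simp
next
  fix x z' assume x: "x \<in> pts (dual_frame B)" and r: "fle (dual_frame A) (dh x) z'"
  hence "x \<in> pf B" "z' \<in> pf A" "dh x \<subseteq> z'" by auto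
  then obtain z where "z \<in> pf B" "x \<subseteq> z" "dh z = z'" using dh_fle_back by blast
  thus "\<exists>z. fle (dual_frame B) x z \<and> dh z = z'" using \<open>x \<in> pf B\<close> by auto
next
  fix x y assume "fsq (dual_frame B) x y"
  thus "fsq (dual_frame A) (dh x) (dh y)" using dh_sq_fwd by simp
next
  fix x z' assume x: "x \<in> pts (dual_frame B)" and r: "fsq (dual_frame A) (dh x) z'"
  hence x': "x \<in> pf B" and sq: "pf_sq A (dh x) z'" by auto
  have "z' \<in> pf A" using sq unfolding pf_sq_def by (elim conjE)
  then obtain z where "pf_sq B x z" "dh z = z'" using dh_sq_back x' sq by blast
  thus "\<exists>z. fsq (dual_frame B) x z \<and> dh z = z'" by auto
next
  fix a' assume "a' \<in> adm (dual_frame A)"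
  then obtain a where a: "a \<in> A.car" "a' = tld A a" by auto
  have "{x \<in> pts (dual_frame B). dh x \<in> a'} = tld B (h a)"
  proof (intro set_eqI iffI)
    fix x assume "x \<in> {x \<in> pts (dual_frame B). dh x \<in> a'}"
    hence "x \<in> pf B" "a \<in> dh x" using a unfolding tld_def by auto
    thus "x \<in> tld B (h a)" unfolding tld_def dual_hom_def by simp
  next
    fix x assume "x \<in> tld B (h a)"
    hence "x \<in> pf B" "h a \<in> x" unfolding tld_def by auto
    thus "x \<in> {x \<in> pts (dual_frame B). dh x \<in> a'}" using a dh_pf unfolding tld_def dual_hom_def by simp
  qed
  thus "{x \<in> pts (dual_frame B). dh x \<in> a'} \<in> adm (dual_frame B)" using a by simp
qed

lemma dh_nat: "a \<in> A.car \<Longrightarrow> cplx_hom (dual_frame B) dh (eta A a) = eta B (h a)"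
  unfolding cplx_hom_def eta_def tld_def dual_hom_def using dh_pf unfolding dual_hom_def by auto

end



lemma ca_simps[simp]: "hcar (cplx_alg X) = adm X" "hmeet (cplx_alg X) = (\<inter>)" "hjoin (cplx_alg X) = (\<union>)"
  "himp (cplx_alg X) = fimp X" "hlew (cplx_alg X) = flew X" "htop (cplx_alg X) = pts X" "hbot (cplx_alg X) = {}"
  unfolding cplx_alg_def by simp_all

lemma ca_le: "hle (cplx_alg X) a b \<longleftrightarrow> a \<subseteq> b"
  unfolding hle_def by auto

context hlal
begin

lemma tld_inj_on: "inj_on (tld A) car"
  using tld_inj by (intro inj_onI) simp

lemma eta_hom: "hla_hom A (cplx_alg (dual_frame A)) (eta A)"
  unfolding hla_hom_def eta_def
  using tld_tp tld_bt tld_meet tld_join tld_imp tld_lw by simp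

lemma eta_iso: "hla_iso A (cplx_alg (dual_frame A)) (eta A)"
  unfolding hla_iso_def
proof (intro conjI exI[of _ "inv_into car (tld A)"])
  show "hla_hom A (cplx_alg (dual_frame A)) (eta A)" by (rule eta_hom)
  let ?g = "inv_into car (tld A)"
  have gt: "\<And>a. a \<in> car \<Longrightarrow> ?g (tld A a) = a" using inv_into_f_f[OF tld_inj_on] by simp
  show "\<forall>a\<in>car. ?g (eta A a) = a" unfolding eta_def using gt by simp
  show "\<forall>b\<in>hcar (cplx_alg (dual_frame A)). eta A (?g b) = b"
    unfolding eta_def by (simp add: f_inv_into_f)
  show "hla_hom (cplx_alg (dual_frame A)) A ?g"
    unfolding hla_hom_def
  proof (intro conjI ballI)
    fix S assume "S \<in> hcar (cplx_alg (dual_frame A))"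
    then obtain a where "a \<in> car" "S = tld A a" by auto
    thus "?g S \<in> car" using gt by simp
  next
    show "?g (htop (cplx_alg (dual_frame A))) = tp" using gt[of tp] tld_tp by simp
    show "?g (hbot (cplx_alg (dual_frame A))) = bt" using gt[of bt] tld_bt by simp
  next
    fix S T assume "S \<in> hcar (cplx_alg (dual_frame A))" "T \<in> hcar (cplx_alg (dual_frame A))"
    then obtain a b where ab: "a \<in> car" "S = tld A a" "b \<in> car" "T = tld A b" by auto
    show "?g (hmeet (cplx_alg (dual_frame A)) S T) = m (?g S) (?g T)"
      using ab gt tld_meet[of a b] gt[of "m a b"] by simp
    show "?g (hjoin (cplx_alg (dual_frame A)) S T) = j (?g S) (?g T)"
      using ab gt tld_join[of a b] gt[of "j a b"] by simp
    show "?g (himp (cplx_alg (dual_frame A)) S T) = im (?g S) (?g T)"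
      using ab gt tld_imp[of a b] gt[of "im a b"] by simp
    show "?g (hlew (cplx_alg (dual_frame A)) S T) = lw (?g S) (?g T)"
      using ab gt tld_lw[of a b] gt[of "lw a b"] by simp
  qed
qed

end

locale gfr =
  fixes X :: "'x gframe"
  assumes G: "general_frame X"
begin

lemma LF: "lew_frame X" using G unfolding general_frame_def by simp

lemma fle_pts: "fle X x y \<Longrightarrow> x \<in> pts X \<and> y \<in> pts X"
  and fsq_pts: "fsq X x y \<Longrightarrow> x \<in> pts X \<and> y \<in> pts X"
  and fle_refl: "x \<in> pts X \<Longrightarrow> fle X x x"
  and fle_antisym: "fle X x y \<Longrightarrow> fle X y x \<Longrightarrow> x = y"
  and fle_trans: "fle X x y \<Longrightarrow> fle X y z \<Longrightarrow> fle X x z"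
  and fle_sq: "fle X x y \<Longrightarrow> fsq X y z \<Longrightarrow> fsq X x z"
  using LF unfolding lew_frame_def by blast+

lemma adm_up: "a \<in> adm X \<Longrightarrow> is_upset X a"
  and adm_pts: "pts X \<in> adm X" and adm_empty: "{} \<in> adm X"
  and adm_int: "a \<in> adm X \<Longrightarrow> b \<in> adm X \<Longrightarrow> a \<inter> b \<in> adm X"
  and adm_un: "a \<in> adm X \<Longrightarrow> b \<in> adm X \<Longrightarrow> a \<union> b \<in> adm X"
  and adm_imp: "a \<in> adm X \<Longrightarrow> b \<in> adm X \<Longrightarrow> fimp X a b \<in> adm X"
  and adm_lew: "a \<in> adm X \<Longrightarrow> b \<in> adm X \<Longrightarrow> flew X a b \<in> adm X"
  using G unfolding general_frame_def by blast+

lemma adm_sub: "a \<in> adm X \<Longrightarrow> a \<subseteq> pts X"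
  using adm_up unfolding is_upset_def by blast

lemma adm_upc: "a \<in> adm X \<Longrightarrow> x \<in> a \<Longrightarrow> fle X x y \<Longrightarrow> y \<in> a"
  using adm_up fle_pts unfolding is_upset_def by blast

lemma resid_sets:
  assumes a: "a \<in> adm X" and c: "c \<in> adm X"
  shows "c \<inter> a \<subseteq> b \<longleftrightarrow> c \<subseteq> fimp X a b"
proof
  assume h: "c \<inter> a \<subseteq> b"
  show "c \<subseteq> fimp X a b"
  proof
    fix x assume x: "x \<in> c"
    have "x \<in> pts X" using x adm_sub[OF c] by auto
    moreover have "\<forall>y\<in>pts X. fle X x y \<and> y \<in> a \<longrightarrow> y \<in> b"
      using adm_upc[OF c x] h by blast
    ultimately show "x \<in> fimp X a b" unfolding fimp_def by simp
  qed
next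
  assume h: "c \<subseteq> fimp X a b"
  show "c \<inter> a \<subseteq> b"
  proof
    fix x assume x: "x \<in> c \<inter> a"
    hence xp: "x \<in> pts X" using adm_sub[OF c] by auto
    have "x \<in> fimp X a b" using h x by auto
    thus "x \<in> b" unfolding fimp_def using x xp fle_refl by auto
  qed
qed

lemma cplx_hla: "is_hla (cplx_alg X)"
proof -
  have heyt: "is_heyting (cplx_alg X)"
    unfolding is_heyting_def hle_def ca_simps
  proof (intro conjI ballI)
    show "pts X \<in> adm X" by (rule adm_pts)
    show "{} \<in> adm X" by (rule adm_empty)
  next
    fix a b assume "a \<in> adm X" "b \<in> adm X"
    thus "a \<inter> b \<in> adm X" "a \<union> b \<in> adm X" "fimp X a b \<in> adm X" "flew X a b \<in> adm X"
      using adm_int adm_un adm_imp adm_lew by auto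
  next
    fix a assume "a \<in> adm X"
    thus "a \<inter> pts X = a" "a \<union> {} = a" using adm_sub by auto
  next
    fix a b c assume a: "a \<in> adm X" "b \<in> adm X" "c \<in> adm X"
    have "c \<inter> a \<inter> b = c \<inter> a \<longleftrightarrow> c \<inter> a \<subseteq> b" by auto
    also have "\<dots> \<longleftrightarrow> c \<subseteq> fimp X a b" using resid_sets a by simp
    also have "\<dots> \<longleftrightarrow> c \<inter> fimp X a b = c" by auto
    finally show "(c \<inter> a \<inter> b = c \<inter> a) = (c \<inter> fimp X a b = c)" .
  qed auto
  have "\<forall>a\<in>adm X. \<forall>b\<in>adm X. \<forall>c\<in>adm X.
        flew X a b \<inter> flew X a c = flew X a (b \<inter> c) \<and>
        flew X a c \<inter> flew X b c = flew X (a \<union> b) c \<and>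
        flew X a b \<inter> flew X b c \<inter> (flew X a c) = flew X a b \<inter> flew X b c"
    unfolding flew_def by blast
  moreover have "\<forall>a\<in>adm X. flew X a a = pts X" unfolding flew_def by blast
  ultimately show ?thesis unfolding is_hla_def hle_def ca_simps using heyt by simp
qed

end

locale dfr = gfr +
  assumes D: "descriptive_frame X"
begin

lemma compact: "S \<subseteq> adm X \<union> {pts X - a |a. a \<in> adm X} \<Longrightarrow> fip X S \<Longrightarrow> pts X \<inter> \<Inter>S \<noteq> {}"
  using D unfolding descriptive_frame_def compact_frame_def by blast

lemma ref_le: "x \<in> pts X \<Longrightarrow> y \<in> pts X \<Longrightarrow> \<not> fle X x y \<Longrightarrow> \<exists>a\<in>adm X. x \<in> a \<and> y \<notin> a"
  using D unfolding descriptive_frame_def by blast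

lemma ref_sq: "x \<in> pts X \<Longrightarrow> y \<in> pts X \<Longrightarrow> \<not> fsq X x y \<Longrightarrow>
    \<exists>a\<in>adm X. \<exists>b\<in>adm X. x \<in> flew X a b \<and> y \<in> a \<and> y \<notin> b"
  using D unfolding descriptive_frame_def by blast

end

locale fmor = X: gfr X + Y: gfr Y for X :: "'x gframe" and Y :: "'y gframe" +
  fixes f :: "'x \<Rightarrow> 'y"
  assumes M: "dframe_mor X Y f"
begin

lemma f_pts: "x \<in> pts X \<Longrightarrow> f x \<in> pts Y"
  and f_fle: "fle X x y \<Longrightarrow> fle Y (f x) (f y)"
  and f_fle_back: "x \<in> pts X \<Longrightarrow> fle Y (f x) z' \<Longrightarrow> \<exists>z. fle X x z \<and> f z = z'"
  and f_sq: "fsq X x y \<Longrightarrow> fsq Y (f x) (f y)"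
  and f_sq_back: "x \<in> pts X \<Longrightarrow> fsq Y (f x) z' \<Longrightarrow> \<exists>z. fsq X x z \<and> f z = z'"
  and f_adm: "a' \<in> adm Y \<Longrightarrow> {x\<in>pts X. f x \<in> a'} \<in> adm X"
  using M unfolding dframe_mor_def bounded_for_def by blast+

abbreviation "pre \<equiv> cplx_hom X f"

lemma pre_imp: "pre (fimp Y a b) = fimp X (pre a) (pre b)"
proof (intro set_eqI iffI)
  fix x assume "x \<in> pre (fimp Y a b)"
  hence x: "x \<in> pts X" "\<forall>y\<in>pts Y. fle Y (f x) y \<and> y \<in> a \<longrightarrow> y \<in> b"
    unfolding cplx_hom_def fimp_def by auto
  have "\<forall>y\<in>pts X. fle X x y \<and> y \<in> pre a \<longrightarrow> y \<in> pre b"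
  proof (intro ballI impI)
    fix y assume y: "y \<in> pts X" "fle X x y \<and> y \<in> pre a"
    hence "fle Y (f x) (f y)" "f y \<in> a" "f y \<in> pts Y" using f_fle f_pts unfolding cplx_hom_def by auto
    hence "f y \<in> b" using x(2) by blast
    thus "y \<in> pre b" unfolding cplx_hom_def using y by simp
  qed
  thus "x \<in> fimp X (pre a) (pre b)" unfolding fimp_def using x(1) by simp
next
  fix x assume "x \<in> fimp X (pre a) (pre b)"
  hence x: "x \<in> pts X" "\<forall>y\<in>pts X. fle X x y \<and> y \<in> pre a \<longrightarrow> y \<in> pre b"
    unfolding fimp_def by auto
  have "\<forall>y\<in>pts Y. fle Y (f x) y \<and> y \<in> a \<longrightarrow> y \<in> b"
  proof (intro ballI impI)
    fix y assume y: "y \<in> pts Y" "fle Y (f x) y \<and> y \<in> a"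
    then obtain z where z: "fle X x z" "f z = y" using f_fle_back x(1) by blast
    have zp: "z \<in> pts X" using X.fle_pts[OF z(1)] by simp
    hence "z \<in> pre a" unfolding cplx_hom_def using z y by simp
    hence "z \<in> pre b" using x(2) zp z by blast
    thus "y \<in> b" unfolding cplx_hom_def using z by simp
  qed
  thus "x \<in> pre (fimp Y a b)" unfolding cplx_hom_def fimp_def using x(1) f_pts by simp
qed

lemma pre_lew: "pre (flew Y a b) = flew X (pre a) (pre b)"
proof (intro set_eqI iffI)
  fix x assume "x \<in> pre (flew Y a b)"
  hence x: "x \<in> pts X" "\<forall>y\<in>pts Y. fsq Y (f x) y \<and> y \<in> a \<longrightarrow> y \<in> b"
    unfolding cplx_hom_def flew_def by auto
  have "\<forall>y\<in>pts X. fsq X x y \<and> y \<in> pre a \<longrightarrow> y \<in> pre b"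
  proof (intro ballI impI)
    fix y assume y: "y \<in> pts X" "fsq X x y \<and> y \<in> pre a"
    hence "fsq Y (f x) (f y)" "f y \<in> a" "f y \<in> pts Y" using f_sq f_pts unfolding cplx_hom_def by auto
    hence "f y \<in> b" using x(2) by blast
    thus "y \<in> pre b" unfolding cplx_hom_def using y by simp
  qed
  thus "x \<in> flew X (pre a) (pre b)" unfolding flew_def using x(1) by simp
next
  fix x assume "x \<in> flew X (pre a) (pre b)"
  hence x: "x \<in> pts X" "\<forall>y\<in>pts X. fsq X x y \<and> y \<in> pre a \<longrightarrow> y \<in> pre b"
    unfolding flew_def by auto
  have "\<forall>y\<in>pts Y. fsq Y (f x) y \<and> y \<in> a \<longrightarrow> y \<in> b"
  proof (intro ballI impI)
    fix y assume y: "y \<in> pts Y" "fsq Y (f x) y \<and> y \<in> a"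
    then obtain z where z: "fsq X x z" "f z = y" using f_sq_back x(1) by blast
    have zp: "z \<in> pts X" using X.fsq_pts[OF z(1)] by simp
    hence "z \<in> pre a" unfolding cplx_hom_def using z y by simp
    hence "z \<in> pre b" using x(2) zp z by blast
    thus "y \<in> b" unfolding cplx_hom_def using z by simp
  qed
  thus "x \<in> pre (flew Y a b)" unfolding cplx_hom_def flew_def using x(1) f_pts by simp
qed

lemma pre_hom: "hla_hom (cplx_alg Y) (cplx_alg X) pre"
  unfolding hla_hom_def ca_simps
proof (intro conjI ballI)
  fix a assume "a \<in> adm Y"
  thus "pre a \<in> adm X" unfolding cplx_hom_def by (rule f_adm)
next
  show "pre (pts Y) = pts X" unfolding cplx_hom_def using f_pts by auto
  show "pre {} = {}" unfolding cplx_hom_def by auto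
next
  fix a b
  show "pre (a \<inter> b) = pre a \<inter> pre b" "pre (a \<union> b) = pre a \<union> pre b"
    unfolding cplx_hom_def by auto
  show "pre (fimp Y a b) = fimp X (pre a) (pre b)" by (rule pre_imp)
  show "pre (flew Y a b) = flew X (pre a) (pre b)" by (rule pre_lew)
qed

end

context dfr
begin

abbreviation "eps \<equiv> epsilon X"
abbreviation "CX \<equiv> cplx_alg X"

lemma pfC: "q \<in> pf CX \<longleftrightarrow> q \<subseteq> adm X \<and> pts X \<in> q \<and> {} \<notin> q \<and>
     (\<forall>a\<in>q. \<forall>b\<in>adm X. a \<subseteq> b \<longrightarrow> b \<in> q) \<and> (\<forall>a\<in>q. \<forall>b\<in>q. a \<inter> b \<in> q) \<and>
     (\<forall>a\<in>adm X. \<forall>b\<in>adm X. a \<union> b \<in> q \<longrightarrow> a \<in> q \<or> b \<in> q)"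
  unfolding pf_def prime_filter_def ca_simps ca_le by simp

lemma eps_pf: "x \<in> pts X \<Longrightarrow> eps x \<in> pf CX"
  unfolding pfC epsilon_def using adm_pts adm_empty adm_int by auto

lemma fle_iff: "x \<in> pts X \<Longrightarrow> y \<in> pts X \<Longrightarrow> fle X x y \<longleftrightarrow> eps x \<subseteq> eps y"
proof
  assume "fle X x y"
  thus "eps x \<subseteq> eps y" unfolding epsilon_def using adm_upc by blast
next
  assume xy: "x \<in> pts X" "y \<in> pts X" and sub: "eps x \<subseteq> eps y"
  show "fle X x y"
  proof (rule ccontr)
    assume "\<not> fle X x y"
    then obtain a where "a \<in> adm X" "x \<in> a" "y \<notin> a" using ref_le xy by blast
    thus False using sub unfolding epsilon_def by blast
  qed
qed

lemma eps_inj: "x \<in> pts X \<Longrightarrow> y \<in> pts X \<Longrightarrow> eps x = eps y \<Longrightarrow> x = y"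
  using fle_iff fle_antisym by blast

lemma fsq_iff: "x \<in> pts X \<Longrightarrow> y \<in> pts X \<Longrightarrow> fsq X x y \<longleftrightarrow> pf_sq CX (eps x) (eps y)"
proof
  assume xy: "x \<in> pts X" "y \<in> pts X" and sq: "fsq X x y"
  have "\<forall>a\<in>adm X. \<forall>b\<in>adm X. flew X a b \<in> eps x \<and> a \<in> eps y \<longrightarrow> b \<in> eps y"
  proof (intro ballI impI)
    fix a b assume ab: "a \<in> adm X" "b \<in> adm X" "flew X a b \<in> eps x \<and> a \<in> eps y"
    hence "x \<in> flew X a b" "y \<in> a" unfolding epsilon_def by auto
    hence "y \<in> b" unfolding flew_def using sq xy by blast
    thus "b \<in> eps y" unfolding epsilon_def using ab by simp
  qed
  thus "pf_sq CX (eps x) (eps y)" unfolding pf_sq_def ca_simps using eps_pf xy by (intro conjI)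
next
  assume xy: "x \<in> pts X" "y \<in> pts X" and sq: "pf_sq CX (eps x) (eps y)"
  have R: "\<forall>a\<in>adm X. \<forall>b\<in>adm X. flew X a b \<in> eps x \<and> a \<in> eps y \<longrightarrow> b \<in> eps y"
    using sq unfolding pf_sq_def ca_simps by (elim conjE)
  show "fsq X x y"
  proof (rule ccontr)
    assume "\<not> fsq X x y"
    then obtain a b where ab: "a \<in> adm X" "b \<in> adm X" "x \<in> flew X a b" "y \<in> a" "y \<notin> b"
      using ref_sq xy by blast
    have "flew X a b \<in> eps x" "a \<in> eps y" unfolding epsilon_def using ab adm_lew by auto
    hence "b \<in> eps y" using R ab by blast
    thus False using ab unfolding epsilon_def by simp
  qed
qed

lemma eps_surj: assumes q: "q \<in> pf CX" shows "\<exists>z\<in>pts X. eps z = q"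
proof -
  have Q: "q \<subseteq> adm X \<and> pts X \<in> q \<and> {} \<notin> q \<and>
     (\<forall>a\<in>q. \<forall>b\<in>adm X. a \<subseteq> b \<longrightarrow> b \<in> q) \<and> (\<forall>a\<in>q. \<forall>b\<in>q. a \<inter> b \<in> q) \<and>
     (\<forall>a\<in>adm X. \<forall>b\<in>adm X. a \<union> b \<in> q \<longrightarrow> a \<in> q \<or> b \<in> q)" using q unfolding pfC .
  have q1: "q \<subseteq> adm X" using Q by (elim conjE)
  have q2: "pts X \<in> q" using Q by (elim conjE)
  have q3: "{} \<notin> q" using Q by (elim conjE)
  have q4: "\<forall>a\<in>q. \<forall>b\<in>adm X. a \<subseteq> b \<longrightarrow> b \<in> q" using Q by (elim conjE)
  have q5: "\<forall>a\<in>q. \<forall>b\<in>q. a \<inter> b \<in> q" using Q by (elim conjE)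
  have q6: "\<forall>a\<in>adm X. \<forall>b\<in>adm X. a \<union> b \<in> q \<longrightarrow> a \<in> q \<or> b \<in> q" using Q by (elim conjE)
  note qs = q1 q2 q3 q4[rule_format] q5[rule_format] q6[rule_format]
  define S where "S = q \<union> {pts X - a |a. a \<in> adm X \<and> a \<notin> q}"
  have key: "finite F \<Longrightarrow> F \<subseteq> S \<Longrightarrow> \<exists>a\<in>q. \<exists>b\<in>adm X. b \<notin> q \<and> a - b \<subseteq> pts X \<inter> \<Inter>F" for F
  proof (induction F rule: finite_induct)
    case empty
    show ?case using qs(2) adm_empty qs(3) by (intro bexI[of _ "pts X"] bexI[of _ "{}"]) auto
  next
    case (insert s F)
    then obtain a b where ab: "a \<in> q" "b \<in> adm X" "b \<notin> q" "a - b \<subseteq> pts X \<inter> \<Inter>F" by auto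
    have "s \<in> S" using insert by auto
    hence "s \<in> q \<or> (\<exists>c. s = pts X - c \<and> c \<in> adm X \<and> c \<notin> q)" unfolding S_def by auto
    thus ?case
    proof
      assume sq: "s \<in> q"
      have "a \<inter> s \<in> q" using qs(5) ab sq by simp
      moreover have "(a \<inter> s) - b \<subseteq> pts X \<inter> \<Inter>(insert s F)" using ab by auto
      ultimately show ?thesis using ab by blast
    next
      assume "\<exists>c. s = pts X - c \<and> c \<in> adm X \<and> c \<notin> q"
      then obtain c where c: "s = pts X - c" "c \<in> adm X" "c \<notin> q" by blast
      have "b \<union> c \<notin> q" using qs(6)[of b c] ab c by blast
      moreover have "b \<union> c \<in> adm X" using adm_un ab c by simp
      moreover have "a - (b \<union> c) \<subseteq> pts X \<inter> \<Inter>(insert s F)" using ab c by auto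
      ultimately show ?thesis using ab by blast
    qed
  qed
  have "fip X S" unfolding fip_def
  proof (intro allI impI, elim conjE)
    fix F assume F: "F \<subseteq> S" "finite F"
    then obtain a b where ab: "a \<in> q" "b \<in> adm X" "b \<notin> q" "a - b \<subseteq> pts X \<inter> \<Inter>F" using key by blast
    show "pts X \<inter> \<Inter>F \<noteq> {}"
    proof
      assume "pts X \<inter> \<Inter>F = {}"
      hence "a \<subseteq> b" using ab by auto
      hence "b \<in> q" using qs(4) ab by blast
      thus False using ab by simp
    qed
  qed
  moreover have "S \<subseteq> adm X \<union> {pts X - a |a. a \<in> adm X}" unfolding S_def using qs(1) by auto
  ultimately have "pts X \<inter> \<Inter>S \<noteq> {}" using compact by blast
  then obtain z where z: "z \<in> pts X" "z \<in> \<Inter>S" by blast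
  have "eps z = q"
  proof (intro set_eqI iffI)
    fix a assume "a \<in> eps z"
    hence a: "a \<in> adm X" "z \<in> a" unfolding epsilon_def by auto
    show "a \<in> q"
    proof (rule ccontr)
      assume "a \<notin> q"
      hence "pts X - a \<in> S" unfolding S_def using a by blast
      thus False using z a by blast
    qed
  next
    fix a assume "a \<in> q"
    moreover hence "z \<in> a" using z unfolding S_def by blast
    ultimately show "a \<in> eps z" unfolding epsilon_def using qs(1) by blast
  qed
  thus ?thesis using z by blast
qed

definition "geps q = (SOME z. z \<in> pts X \<and> eps z = q)"

lemma geps: "q \<in> pf CX \<Longrightarrow> geps q \<in> pts X \<and> eps (geps q) = q"
  unfolding geps_def using eps_surj by (metis (mono_tags, lifting) someI_ex)

lemma geps_eps: "x \<in> pts X \<Longrightarrow> geps (eps x) = x"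
  using geps[OF eps_pf] eps_inj by blast

lemma eps_adm: "a \<in> adm X \<Longrightarrow> {x\<in>pts X. eps x \<in> tld CX a} = a"
  unfolding tld_def epsilon_def using eps_pf adm_sub by (auto simp: epsilon_def)

lemma eps_iso: "dframe_iso X (dual_frame CX) eps"
  unfolding dframe_iso_def
proof (intro conjI exI[of _ geps])
  show "dframe_mor X (dual_frame CX) eps"
    unfolding dframe_mor_def bounded_for_def
  proof (intro conjI allI impI ballI)
    fix x assume "x \<in> pts X" thus "eps x \<in> pts (dual_frame CX)" using eps_pf by simp
  next
    fix x y assume r: "fle X x y"
    hence "x \<in> pts X" "y \<in> pts X" using fle_pts by auto
    thus "fle (dual_frame CX) (eps x) (eps y)" using r fle_iff eps_pf by simp
  next
    fix x z' assume x: "x \<in> pts X" and r: "fle (dual_frame CX) (eps x) z'"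
    hence z': "z' \<in> pf CX" "eps x \<subseteq> z'" by auto
    then obtain z where z: "z \<in> pts X" "eps z = z'" using eps_surj by blast
    hence "fle X x z" using fle_iff x z' by simp
    thus "\<exists>z. fle X x z \<and> eps z = z'" using z by blast
  next
    fix x y assume r: "fsq X x y"
    hence "x \<in> pts X" "y \<in> pts X" using fsq_pts by auto
    thus "fsq (dual_frame CX) (eps x) (eps y)" using r fsq_iff by simp
  next
    fix x z' assume x: "x \<in> pts X" and r: "fsq (dual_frame CX) (eps x) z'"
    hence sq: "pf_sq CX (eps x) z'" by simp
    hence "z' \<in> pf CX" unfolding pf_sq_def by (elim conjE)
    then obtain z where z: "z \<in> pts X" "eps z = z'" using eps_surj by blast
    hence "fsq X x z" using fsq_iff x sq by simp
    thus "\<exists>z. fsq X x z \<and> eps z = z'" using z by blast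
  next
    fix a' assume "a' \<in> adm (dual_frame CX)"
    then obtain a where a: "a \<in> adm X" "a' = tld CX a" by auto
    thus "{x \<in> pts X. eps x \<in> a'} \<in> adm X" using eps_adm by simp
  qed
next
  show "dframe_mor (dual_frame CX) X geps"
    unfolding dframe_mor_def bounded_for_def
  proof (intro conjI allI impI ballI)
    fix q assume "q \<in> pts (dual_frame CX)" thus "geps q \<in> pts X" using geps by simp
  next
    fix p q assume r: "fle (dual_frame CX) p q"
    hence pq: "p \<in> pf CX" "q \<in> pf CX" "p \<subseteq> q" by auto
    thus "fle X (geps p) (geps q)" using geps[of p] geps[of q] fle_iff by simp
  next
    fix p z' assume p: "p \<in> pts (dual_frame CX)" and r: "fle X (geps p) z'"
    have pp: "p \<in> pf CX" using p by simp
    have z': "z' \<in> pts X" using fle_pts[OF r] by simp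
    have "eps (geps p) \<subseteq> eps z'" using fle_iff[of "geps p" z'] r z' geps[OF pp] by simp
    hence "fle (dual_frame CX) p (eps z')" using geps[OF pp] eps_pf[OF z'] pp by simp
    thus "\<exists>z. fle (dual_frame CX) p z \<and> geps z = z'" using geps_eps[OF z'] by blast
  next
    fix p q assume r: "fsq (dual_frame CX) p q"
    hence sq: "pf_sq CX p q" by simp
    have pq1: "p \<in> pf CX" using sq unfolding pf_sq_def by (elim conjE)
    have pq2: "q \<in> pf CX" using sq unfolding pf_sq_def by (elim conjE)
    note pq = pq1 pq2
    thus "fsq X (geps p) (geps q)" using geps[of p] geps[of q] fsq_iff sq by simp
  next
    fix p z' assume p: "p \<in> pts (dual_frame CX)" and r: "fsq X (geps p) z'"
    have pp: "p \<in> pf CX" using p by simp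
    have z': "z' \<in> pts X" using fsq_pts[OF r] by simp
    have "pf_sq CX (eps (geps p)) (eps z')" using fsq_iff[of "geps p" z'] r z' geps[OF pp] by simp
    hence "fsq (dual_frame CX) p (eps z')" using geps[OF pp] by simp
    thus "\<exists>z. fsq (dual_frame CX) p z \<and> geps z = z'" using geps_eps[OF z'] by blast
  next
    fix a assume a: "a \<in> adm X"
    have "{q \<in> pts (dual_frame CX). geps q \<in> a} = tld CX a"
    proof (intro set_eqI iffI)
      fix q assume "q \<in> {q \<in> pts (dual_frame CX). geps q \<in> a}"
      hence q: "q \<in> pf CX" "geps q \<in> a" by auto
      hence "a \<in> eps (geps q)" unfolding epsilon_def using a by simp
      thus "q \<in> tld CX a" using geps[OF q(1)] q unfolding tld_def by simp
    next
      fix q assume "q \<in> tld CX a"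
      hence q: "q \<in> pf CX" "a \<in> q" unfolding tld_def by auto
      hence "a \<in> eps (geps q)" using geps[OF q(1)] by simp
      thus "q \<in> {q \<in> pts (dual_frame CX). geps q \<in> a}" using q unfolding epsilon_def by simp
    qed
    thus "{q \<in> pts (dual_frame CX). geps q \<in> a} \<in> adm (dual_frame CX)" using a by simp
  qed
next
  show "\<forall>x\<in>pts X. geps (eps x) = x" using geps_eps by simp
  show "\<forall>y\<in>pts (dual_frame CX). eps (geps y) = y" using geps by simp
qed

end



lemma hlalI: assumes "is_hla A" shows "hlal A"
proof -
  have "is_heyting A" using assms unfolding is_hla_def by (elim conjE)
  thus ?thesis unfolding hlal_def hlal_axioms_def heyt_def using assms by (intro conjI)
qed

lemma hhomI: assumes "is_hla A" "is_hla B" "hla_hom A B h" shows "hhom A B h"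
  unfolding hhom_def hhom_axioms_def using hlalI[OF assms(1)] hlalI[OF assms(2)] assms(3) by (intro conjI)

lemma gfrI: "descriptive_frame X \<Longrightarrow> gfr X"
  unfolding gfr_def descriptive_frame_def by (elim conjE)

lemma dfrI: "descriptive_frame X \<Longrightarrow> dfr X"
  unfolding dfr_def dfr_axioms_def using gfrI by (intro conjI)

lemma fmorI: assumes "descriptive_frame X" "descriptive_frame Y" "dframe_mor X Y f" shows "fmor X Y f"
  unfolding fmor_def fmor_axioms_def using gfrI[OF assms(1)] gfrI[OF assms(2)] assms(3) by (intro conjI)

theorem theorem3p20:
  shows
  \<comment> \<open>(.)_* is a functor HLAs -> D-Frm^op\<close>
  "(\<forall>A :: 'a hla. is_hla A \<longrightarrow> descriptive_frame (dual_frame A))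
 \<and> (\<forall>(A :: 'a hla) (B :: 'b hla) h. is_hla A \<and> is_hla B \<and> hla_hom A B h \<longrightarrow>
        dframe_mor (dual_frame B) (dual_frame A) (dual_hom A h))
 \<and> (\<forall>A :: 'a hla. is_hla A \<longrightarrow> (\<forall>q\<in>pf A. dual_hom A (\<lambda>a. a) q = q))
 \<and> (\<forall>(A :: 'a hla) (B :: 'b hla) (C :: 'c hla) h g.
        is_hla A \<and> is_hla B \<and> is_hla C \<and> hla_hom A B h \<and> hla_hom B C g \<longrightarrow>
        (\<forall>q\<in>pf C. dual_hom A (g \<circ> h) q = dual_hom A h (dual_hom B g q)))
 \<and> (\<forall>X :: 'x gframe. descriptive_frame X \<longrightarrow> is_hla (cplx_alg X))
 \<and> (\<forall>(X :: 'x gframe) (Y :: 'y gframe) f. descriptive_frame X \<and> descriptive_frame Y \<and>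
        dframe_mor X Y f \<longrightarrow> hla_hom (cplx_alg Y) (cplx_alg X) (cplx_hom X f))
 \<and> (\<forall>X :: 'x gframe. descriptive_frame X \<longrightarrow> (\<forall>a\<in>adm X. cplx_hom X (\<lambda>x. x) a = a))
 \<and> (\<forall>(X :: 'x gframe) (Y :: 'y gframe) (Z :: 'z gframe) f g.
        descriptive_frame X \<and> descriptive_frame Y \<and> descriptive_frame Z \<and>
        dframe_mor X Y f \<and> dframe_mor Y Z g \<longrightarrow>
        (\<forall>c\<in>adm Z. cplx_hom X (g \<circ> f) c = cplx_hom X f (cplx_hom Y g c)))
 \<and> (\<forall>A :: 'a hla. is_hla A \<longrightarrow> hla_iso A (cplx_alg (dual_frame A)) (eta A))
 \<and> (\<forall>(A :: 'a hla) (B :: 'b hla) h. is_hla A \<and> is_hla B \<and> hla_hom A B h \<longrightarrow>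
        (\<forall>a\<in>hcar A. cplx_hom (dual_frame B) (dual_hom A h) (eta A a) = eta B (h a)))
 \<and> (\<forall>X :: 'x gframe. descriptive_frame X \<longrightarrow> dframe_iso X (dual_frame (cplx_alg X)) (epsilon X))
 \<and> (\<forall>(X :: 'x gframe) (Y :: 'y gframe) f. descriptive_frame X \<and> descriptive_frame Y \<and>
        dframe_mor X Y f \<longrightarrow>
        (\<forall>x\<in>pts X. dual_hom (cplx_alg Y) (cplx_hom X f) (epsilon X x) = epsilon Y (f x)))"
proof (intro conjI allI impI ballI; (elim conjE)?)
  fix A :: "'a hla" assume "is_hla A"
  thus "descriptive_frame (dual_frame A)" by (rule hlal.dual_descriptive[OF hlalI])
next
  fix A :: "'a hla" and B :: "'b hla" and h assume "is_hla A" "is_hla B" "hla_hom A B h"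
  thus "dframe_mor (dual_frame B) (dual_frame A) (dual_hom A h)" by (rule hhom.dh_mor[OF hhomI])
next
  fix A :: "'a hla" and q assume "q \<in> pf A"
  hence "q \<subseteq> hcar A" unfolding pf_def prime_filter_def by blast
  thus "dual_hom A (\<lambda>a. a) q = q" unfolding dual_hom_def by auto
next
  fix A :: "'a hla" and B :: "'b hla" and C :: "'c hla" and h g q
  assume "hla_hom A B h"
  hence "\<forall>a\<in>hcar A. h a \<in> hcar B" unfolding hla_hom_def by blast
  thus "dual_hom A (g \<circ> h) q = dual_hom A h (dual_hom B g q)" unfolding dual_hom_def by auto
next
  fix X :: "'x gframe" assume "descriptive_frame X"
  thus "is_hla (cplx_alg X)" by (rule gfr.cplx_hla[OF gfrI])
next
  fix X :: "'x gframe" and Y :: "'y gframe" and f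
  assume "descriptive_frame X" "descriptive_frame Y" "dframe_mor X Y f"
  thus "hla_hom (cplx_alg Y) (cplx_alg X) (cplx_hom X f)" by (rule fmor.pre_hom[OF fmorI])
next
  fix X :: "'x gframe" and a assume "descriptive_frame X" "a \<in> adm X"
  hence "a \<subseteq> pts X" by (rule gfr.adm_sub[OF gfrI])
  thus "cplx_hom X (\<lambda>x. x) a = a" unfolding cplx_hom_def by auto
next
  fix X :: "'x gframe" and Y :: "'y gframe" and Z :: "'z gframe" and f g c
  assume "dframe_mor X Y f"
  hence "\<forall>x\<in>pts X. f x \<in> pts Y" unfolding dframe_mor_def by blast
  thus "cplx_hom X (g \<circ> f) c = cplx_hom X f (cplx_hom Y g c)" unfolding cplx_hom_def by auto
next
  fix A :: "'a hla" assume "is_hla A"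
  thus "hla_iso A (cplx_alg (dual_frame A)) (eta A)" by (rule hlal.eta_iso[OF hlalI])
next
  fix A :: "'a hla" and B :: "'b hla" and h a assume "is_hla A" "is_hla B" "hla_hom A B h" "a \<in> hcar A"
  thus "cplx_hom (dual_frame B) (dual_hom A h) (eta A a) = eta B (h a)" by (rule hhom.dh_nat[OF hhomI])
next
  fix X :: "'x gframe" assume "descriptive_frame X"
  thus "dframe_iso X (dual_frame (cplx_alg X)) (epsilon X)" by (rule dfr.eps_iso[OF dfrI])
next
  fix X :: "'x gframe" and Y :: "'y gframe" and f x
  assume dX: "descriptive_frame X" and dY: "descriptive_frame Y" and M: "dframe_mor X Y f" and x: "x \<in> pts X"
  have fx: "f x \<in> pts Y" using M x unfolding dframe_mor_def by blast
  have adm: "\<And>a. a \<in> adm Y \<Longrightarrow> cplx_hom X f a \<in> adm X"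
    using M unfolding dframe_mor_def cplx_hom_def by blast
  show "dual_hom (cplx_alg Y) (cplx_hom X f) (epsilon X x) = epsilon Y (f x)"
    unfolding dual_hom_def epsilon_def ca_simps using adm x fx unfolding cplx_hom_def by auto
qed

end
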